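(* Let $A\in\mathbb{C}^{n\times n}$, $B\in\mathbb{C}^{n\times m}$, $C\in\mathbb{C}^{p\times n}$, $D\in\mathbb{C}^{p\times m}$ and $F\in\mathbb{C}^{\nu\times\nu}$, and suppose $\mathrm{eig}(A)\cap\mathrm{eig}(F)=\emptyset$. The following statements are equivalent: (i) $\mathcal{R}_\Sigma(\lambda)$ has full column rank $n+m$ for all $\lambda\in\mathrm{eig}(F)$; (ii) for every pair $(P,Q)\in\mathbb{C}^{n\times\nu}\times\mathbb{C}^{p\times\nu}$ for which the system $$\Pi F = A\Pi + B\Psi + P,\qquad 0 = C\Pi + D\Psi + Q$$ admits a solution $(\Pi,\Psi)\in\mathbb{C}^{n\times\nu}\times\mathbb{C}^{m\times\nu}$, this solution is unique; (iii) for every pair $(\bar P,\bar Q)\in\mathbb{C}^{\nu\times n}\times\mathbb{C}^{\nu\times m}$, the system $$MA = FM + GC + \bar P,\qquad 0 = -MB + GD + \bar Q$$ admits a solution $(M,G)\in\mathbb{C}^{\nu\times n}\times\mathbb{C}^{\nu\times p}$; (iv) $\mathcal{C}_{\rm p}:\mathbb{C}^{m\times\nu}\to\mathbb{C}^{p\times\nu}$ is injective; (v) $\mathcal{C}_{\rm d}:\mathbb{C}^{\nu\times p}\to\mathbb{C}^{\nu\times m}$ is surjective. Moreover, for any $H\in\mathbb{C}^{m\times\nu}$: (a) if $(F,H)$ is observable and (i) holds, then $(F,\mathcal{C}_{\rm p}(H))$ is observable; (b) if $(F,H)$ is detectable and $\mathcal{R}_\Sigma(\lambda)$ has full column rank for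 all $\lambda\in\mathrm{eig}(F)\cap\mathbb{C}_{\geq 0}$, then $(F,\mathcal{C}_{\rm p}(H))$ is detectable. Furthermore, the converse of (a) holds provided $H\ker(\lambda I_\nu-F)=\mathbb{C}^m$ for all $\lambda\in\mathrm{eig}(F)$, and the converse of (b) holds provided $H\ker(\lambda I_\nu-F)=\mathbb{C}^m$ for all $\lambda\in\mathrm{eig}(F)\cap\mathbb{C}_{\geq 0}$.
   Context: Data: $A\in\mathbb{C}^{n\times n}$, $B\in\mathbb{C}^{n\times m}$, $C\in\mathbb{C}^{p\times n}$, $D\in\mathbb{C}^{p\times m}$, $F\in\mathbb{C}^{\nu\times\nu}$, with $\mathrm{eig}(A)\cap\mathrm{eig}(F)=\emptyset$. The Rosenbrock system matrix is $\mathcal{R}_\Sigma(\lambda)=\begin{bmatrix}A-\lambda I_n & B\\ C & D\end{bmatrix}\in\mathbb{C}^{(n+p)\times(n+m)}$ for $\lambda\in\mathbb{C}$. The steady-state cascade (SSC) operators are defined as follows: for $H\in\mathbb{C}^{m\times\nu}$, $\mathcal{C}_{\rm p}(H)=C\Pi+DH$, where $\Pi\in\mathbb{C}^{n\times\nu}$ is the unique solution of the Sylvester equation $\Pi F - A\Pi = BH$; for $G\in\mathbb{C}^{\nu\times p}$, $\mathcal{C}_{\rm d}(G)=-MB+GD$, where $M\in\mathbb{C}^{\nu\times n}$ is the unique solution of $MA-FM=GC$. $\mathbb{C}_{\geq 0}$ is the set of complex numbers with nonnegative real part. For a matrix $H$ and subspace $\mathcal{V}$, $H\mathcal{V}=\{Hv:v\in\mathcal{V}\}$.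 A pair $(F,H)$ is detectable if every eigenvalue $\lambda$ of $F$ with $\mathrm{Re}\,\lambda\ge0$ is observable, i.e., $Hf\neq 0$ for every nonzero $f$ with $Ff=\lambda f$. *)

theory Defs
  imports "Jordan_Normal_Form.DL_Rank" "Jordan_Normal_Form.Char_Poly"
begin

definition eig :: "complex mat \<Rightarrow> complex set" where
  "eig F = {lam. eigenvalue F lam}"

definition rosenbrock :: "complex mat \<Rightarrow> complex mat \<Rightarrow> complex mat \<Rightarrow> complex mat \<Rightarrow> complex \<Rightarrow> complex mat" where
  "rosenbrock A B C D lam = four_block_mat (A - lam \<cdot>\<^sub>m 1\<^sub>m (dim_row A)) B C D"

definition full_col_rank :: "complex mat \<Rightarrow> bool" where
  "full_col_rank R = (vec_space.rank (dim_row R) R = dim_col R)"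

definition SSC_p :: "complex mat \<Rightarrow> complex mat \<Rightarrow> complex mat \<Rightarrow> complex mat \<Rightarrow> complex mat \<Rightarrow> complex mat \<Rightarrow> complex mat" where
  "SSC_p A B C D F H =
     (let Pi = (THE Pi. Pi \<in> carrier_mat (dim_row A) (dim_row F) \<and> Pi * F - A * Pi = B * H)
      in C * Pi + D * H)"

definition SSC_d :: "complex mat \<Rightarrow> complex mat \<Rightarrow> complex mat \<Rightarrow> complex mat \<Rightarrow> complex mat \<Rightarrow> complex mat \<Rightarrow> complex mat" where
  "SSC_d A B C D F G =
     (let M = (THE M. M \<in> carrier_mat (dim_row F) (dim_row A) \<and> M * A - F * M = G * C)
      in - (M * B) + G * D)"

definition observable_pair :: "complex mat \<Rightarrow> complex mat \<Rightarrow> bool" where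
  "observable_pair F H = (\<forall>lam f. eigenvector F f lam \<longrightarrow> H *\<^sub>v f \<noteq> 0\<^sub>v (dim_row H))"

definition detectable_pair :: "complex mat \<Rightarrow> complex mat \<Rightarrow> bool" where
  "detectable_pair F H = (\<forall>lam f. Re lam \<ge> 0 \<longrightarrow> eigenvector F f lam \<longrightarrow> H *\<^sub>v f \<noteq> 0\<^sub>v (dim_row H))"

definition eigspace :: "complex mat \<Rightarrow> complex \<Rightarrow> complex vec set" where
  "eigspace F lam = {f \<in> carrier_vec (dim_row F). (lam \<cdot>\<^sub>m 1\<^sub>m (dim_row F) - F) *\<^sub>v f = 0\<^sub>v (dim_row F)}"

end

theory Submission
  imports Defs "Jordan_Normal_Form.Schur_Decomposition"
begin

lemma seq_build:
  assumes "\<And>j zs. j < N \<Longrightarrow> length zs = j \<Longrightarrow> \<exists>z. P j zs z"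
  shows "\<exists>zs. length zs = N \<and> (\<forall>j<N. P j (take j zs) (zs!j))"
  using assms
proof (induction N)
  case 0
  then show ?case by auto
next
  case (Suc N)
  then obtain zs where zs: "length zs = N" "\<forall>j<N. P j (take j zs) (zs!j)" by auto
  from Suc.prems[of N zs] zs obtain z where z: "P N zs z" by auto
  show ?case
  proof (intro exI[of _ "zs @ [z]"] conjI allI impI)
    fix j assume "j < Suc N"
    then show "P j (take j (zs @ [z])) ((zs @ [z]) ! j)"
    proof (cases "j < N")
      case True then show ?thesis using zs by (auto simp: nth_append)
    next
      case False then have "j = N" using \<open>j < Suc N\<close> by auto
      then show ?thesis using zs z by (auto simp: nth_append)
    qed
  qed (use zs in auto)
qed

lemma col_XJ:
  fixes X J :: "'a :: comm_ring_1 mat"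
  assumes X: "X \<in> carrier_mat n \<nu>" and J: "J \<in> carrier_mat \<nu> \<nu>" "upper_triangular J"
    and j: "j < \<nu>" and r: "r < n"
  shows "(X * J) $$ (r, j) = (\<Sum>i<j. X $$ (r, i) * J $$ (i, j)) + X $$ (r, j) * J $$ (j, j)"
proof -
  have "(X * J) $$ (r, j) = (\<Sum>i\<in>{0..<\<nu>}. X $$ (r, i) * J $$ (i, j))"
    using X J j r by (simp add: scalar_prod_def)
  also have "{0..<\<nu>} = {0..<Suc j} \<union> {Suc j..<\<nu>}" using j by auto
  also have "(\<Sum>i\<in>{0..<Suc j} \<union> {Suc j..<\<nu>}. X $$ (r, i) * J $$ (i, j))
      = (\<Sum>i\<in>{0..<Suc j}. X $$ (r, i) * J $$ (i, j)) + (\<Sum>i\<in>{Suc j..<\<nu>}. X $$ (r, i) * J $$ (i, j))"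
    by (rule sum.union_disjoint) auto
  also have "(\<Sum>i\<in>{Suc j..<\<nu>}. X $$ (r, i) * J $$ (i, j)) = 0"
  proof (intro sum.neutral ballI)
    fix i assume "i \<in> {Suc j..<\<nu>}"
    then have "J $$ (i, j) = 0" using J by (intro upper_triangularD) auto
    then show "X $$ (r, i) * J $$ (i, j) = 0" by simp
  qed
  also have "(\<Sum>i\<in>{0..<Suc j}. X $$ (r, i) * J $$ (i, j)) = (\<Sum>i<j. X $$ (r, i) * J $$ (i, j)) + X $$ (r, j) * J $$ (j, j)"
    by (simp add: atLeast0LessThan)
  finally show ?thesis by simp
qed

lemma tri_uniq:
  fixes J L1 L2 L3 L4 X Y :: "complex mat"
  assumes J: "J \<in> carrier_mat \<nu> \<nu>" "upper_triangular J"
  and L: "L1 \<in> carrier_mat n n" "L2 \<in> carrier_mat n p" "L3 \<in> carrier_mat m n" "L4 \<in> carrier_mat m p"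
  and kern: "\<And>j x y. j < \<nu> \<Longrightarrow> x \<in> carrier_vec n \<Longrightarrow> y \<in> carrier_vec p \<Longrightarrow>
      L1 *\<^sub>v x + L2 *\<^sub>v y = J $$ (j,j) \<cdot>\<^sub>v x \<Longrightarrow> L3 *\<^sub>v x + L4 *\<^sub>v y = 0\<^sub>v m \<Longrightarrow> x = 0\<^sub>v n \<and> y = 0\<^sub>v p"
  and X: "X \<in> carrier_mat n \<nu>" and Y: "Y \<in> carrier_mat p \<nu>"
  and e1: "L1 * X + L2 * Y = X * J" and e2: "L3 * X + L4 * Y = 0\<^sub>m m \<nu>"
  shows "X = 0\<^sub>m n \<nu> \<and> Y = 0\<^sub>m p \<nu>"
proof -
  have main: "j < \<nu> \<longrightarrow> col X j = 0\<^sub>v n \<and> col Y j = 0\<^sub>v p" for j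
  proof (induction j rule: less_induct)
    case (less j)
    show ?case
    proof
      assume j: "j < \<nu>"
      have IH: "i < j \<Longrightarrow> r < n \<Longrightarrow> X $$ (r, i) = 0" for i r
        using less[of i] j X
        by (metis (no_types, lifting) carrier_matD(1,2) col_def index_vec index_zero_vec(1) order.strict_trans)
      have cX: "col X j \<in> carrier_vec n" and cY: "col Y j \<in> carrier_vec p" using X Y by auto
      have "L1 *\<^sub>v col X j + L2 *\<^sub>v col Y j = J $$ (j,j) \<cdot>\<^sub>v col X j"
      proof (rule eq_vecI)
        fix r assume "r < dim_vec (J $$ (j,j) \<cdot>\<^sub>v col X j)"
        then have r: "r < n" using X by auto
        have "(L1 *\<^sub>v col X j + L2 *\<^sub>v col Y j) $ r = (L1 * X + L2 * Y) $$ (r, j)"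
          using L X Y r j by auto
        also have "\<dots> = (X * J) $$ (r, j)" using e1 by simp
        also have "\<dots> = X $$ (r, j) * J $$ (j, j)"
          using col_XJ[OF X J j r] IH r by simp
        finally show "(L1 *\<^sub>v col X j + L2 *\<^sub>v col Y j) $ r = (J $$ (j,j) \<cdot>\<^sub>v col X j) $ r"
          using r X j by auto
      qed (use L X Y in auto)
      moreover have "L3 *\<^sub>v col X j + L4 *\<^sub>v col Y j = 0\<^sub>v m"
      proof (rule eq_vecI)
        fix r assume "r < dim_vec (0\<^sub>v m :: complex vec)"
        then have r: "r < m" by auto
        have "(L3 *\<^sub>v col X j + L4 *\<^sub>v col Y j) $ r = (L3 * X + L4 * Y) $$ (r, j)"
          using L X Y r j by auto
        also have "\<dots> = 0" using e2 r j by simp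
        finally show "(L3 *\<^sub>v col X j + L4 *\<^sub>v col Y j) $ r = 0\<^sub>v m $ r" using r by simp
      qed (use L in auto)
      ultimately show "col X j = 0\<^sub>v n \<and> col Y j = 0\<^sub>v p" using kern[OF j cX cY] by auto
    qed
  qed
  show ?thesis
  proof
    show "X = 0\<^sub>m n \<nu>"
    proof (rule eq_matI)
      fix r j assume "r < dim_row (0\<^sub>m n \<nu> :: complex mat)" "j < dim_col (0\<^sub>m n \<nu> :: complex mat)"
      then have r: "r < n" and j: "j < \<nu>" by auto
      have "col X j $ r = 0" using main[of j] j r by auto
      then show "X $$ (r, j) = 0\<^sub>m n \<nu> $$ (r, j)" using X r j by auto
    qed (use X in auto)
    show "Y = 0\<^sub>m p \<nu>"
    proof (rule eq_matI)
      fix r j assume "r < dim_row (0\<^sub>m p \<nu> :: complex mat)" "j < dim_col (0\<^sub>m p \<nu> :: complex mat)"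
      then have r: "r < p" and j: "j < \<nu>" by auto
      have "col Y j $ r = 0" using main[of j] j r by auto
      then show "Y $$ (r, j) = 0\<^sub>m p \<nu> $$ (r, j)" using Y r j by auto
    qed (use Y in auto)
  qed
qed

lemma tri_exist:
  fixes J L1 L2 L3 L4 T1 T2 :: "complex mat"
  assumes J: "J \<in> carrier_mat \<nu> \<nu>" "upper_triangular J"
  and L: "L1 \<in> carrier_mat n n" "L2 \<in> carrier_mat n p" "L3 \<in> carrier_mat m n" "L4 \<in> carrier_mat m p"
  and surj: "\<And>j b1 b2. j < \<nu> \<Longrightarrow> b1 \<in> carrier_vec n \<Longrightarrow> b2 \<in> carrier_vec m \<Longrightarrow>
      \<exists>x\<in>carrier_vec n. \<exists>y\<in>carrier_vec p.
      L1 *\<^sub>v x + L2 *\<^sub>v y = J $$ (j,j) \<cdot>\<^sub>v x + b1 \<and> L3 *\<^sub>v x + L4 *\<^sub>v y = b2"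
  and T: "T1 \<in> carrier_mat n \<nu>" "T2 \<in> carrier_mat m \<nu>"
  shows "\<exists>X\<in>carrier_mat n \<nu>. \<exists>Y\<in>carrier_mat p \<nu>. L1 * X + L2 * Y = X * J + T1 \<and> L3 * X + L4 * Y = T2"
proof -
  define P where "P = (\<lambda>j (zs :: (complex vec \<times> complex vec) list) (z :: complex vec \<times> complex vec).
     fst z \<in> carrier_vec n \<and> snd z \<in> carrier_vec p \<and>
     L1 *\<^sub>v fst z + L2 *\<^sub>v snd z = J $$ (j,j) \<cdot>\<^sub>v fst z +
        vec n (\<lambda>r. T1 $$ (r, j) + (\<Sum>i<j. fst (zs ! i) $ r * J $$ (i, j))) \<and>
     L3 *\<^sub>v fst z + L4 *\<^sub>v snd z = col T2 j)"
  have "\<exists>z. P j zs z" if j: "j < \<nu>" and "length zs = j" for j zs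
  proof -
    from surj[OF j, of "vec n (\<lambda>r. T1 $$ (r, j) + (\<Sum>i<j. fst (zs ! i) $ r * J $$ (i, j)))" "col T2 j"]
    obtain x y where "x \<in> carrier_vec n" "y \<in> carrier_vec p"
      "L1 *\<^sub>v x + L2 *\<^sub>v y = J $$ (j,j) \<cdot>\<^sub>v x + vec n (\<lambda>r. T1 $$ (r, j) + (\<Sum>i<j. fst (zs ! i) $ r * J $$ (i, j)))"
      "L3 *\<^sub>v x + L4 *\<^sub>v y = col T2 j" using T j by fastforce
    then show ?thesis unfolding P_def by (intro exI[of _ "(x,y)"]) auto
  qed
  from seq_build[of \<nu> P, OF this] obtain zs where zs: "length zs = \<nu>" "\<forall>j<\<nu>. P j (take j zs) (zs!j)"
    by blast
  define X where "X = mat n \<nu> (\<lambda>(r,j). fst (zs ! j) $ r)"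
  define Y where "Y = mat p \<nu> (\<lambda>(r,j). snd (zs ! j) $ r)"
  have X: "X \<in> carrier_mat n \<nu>" and Y: "Y \<in> carrier_mat p \<nu>" unfolding X_def Y_def by auto
  have Pj: "P j (take j zs) (zs!j)" if "j < \<nu>" for j using zs that by auto
  have colX: "col X j = fst (zs ! j)" if j: "j < \<nu>" for j
    using Pj[OF j] j unfolding P_def X_def by (auto intro!: eq_vecI)
  have colY: "col Y j = snd (zs ! j)" if j: "j < \<nu>" for j
    using Pj[OF j] j unfolding P_def Y_def by (auto intro!: eq_vecI)
  have cf: "fst (zs ! j) \<in> carrier_vec n" "snd (zs ! j) \<in> carrier_vec p" if j: "j < \<nu>" for j
    using Pj[OF j] unfolding P_def by auto
  show ?thesis
  proof (intro bexI conjI)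
    show "L1 * X + L2 * Y = X * J + T1"
    proof (rule eq_matI)
      fix r j assume "r < dim_row (X * J + T1)" "j < dim_col (X * J + T1)"
      then have r: "r < n" and j: "j < \<nu>" using X J T by auto
      have sums: "(\<Sum>i<j. fst (take j zs ! i) $ r * J $$ (i, j)) = (\<Sum>i<j. X $$ (r, i) * J $$ (i, j))"
        using r j unfolding X_def by (intro sum.cong) auto
      have "(L1 * X + L2 * Y) $$ (r, j) = (L1 *\<^sub>v fst (zs!j) + L2 *\<^sub>v snd (zs!j)) $ r"
        using L X Y r j colX[OF j] colY[OF j] cf[OF j] by auto
      also have "\<dots> = J $$ (j,j) * fst (zs ! j) $ r + T1 $$ (r, j) + (\<Sum>i<j. X $$ (r, i) * J $$ (i, j))"
        using Pj[OF j] r sums unfolding P_def by auto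
      also have "\<dots> = (X * J + T1) $$ (r, j)"
        using col_XJ[OF X J j r] X T r j unfolding X_def by auto
      finally show "(L1 * X + L2 * Y) $$ (r, j) = (X * J + T1) $$ (r, j)" .
    qed (use L X Y J T in auto)
    show "L3 * X + L4 * Y = T2"
    proof (rule eq_matI)
      fix r j assume "r < dim_row T2" "j < dim_col T2"
      then have r: "r < m" and j: "j < \<nu>" using T by auto
      have "(L3 * X + L4 * Y) $$ (r, j) = (L3 *\<^sub>v fst (zs!j) + L4 *\<^sub>v snd (zs!j)) $ r"
        using L X Y r j colX[OF j] colY[OF j] cf[OF j] by auto
      also have "\<dots> = T2 $$ (r, j)" using Pj[OF j] r j T unfolding P_def by auto
      finally show "(L3 * X + L4 * Y) $$ (r, j) = T2 $$ (r, j)" .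
    qed (use L X Y T in auto)
  qed (use X Y in auto)
qed

lemma schur_complex:
  fixes F :: "complex mat" assumes F: "F \<in> carrier_mat \<nu> \<nu>"
  obtains P J Q where "P \<in> carrier_mat \<nu> \<nu>" "J \<in> carrier_mat \<nu> \<nu>" "Q \<in> carrier_mat \<nu> \<nu>"
    "P * Q = 1\<^sub>m \<nu>" "Q * P = 1\<^sub>m \<nu>" "F = P * J * Q" "upper_triangular J"
    "\<And>j. j < \<nu> \<Longrightarrow> J $$ (j,j) \<in> eig F"
proof -
  obtain es where es: "char_poly F = (\<Prod>a\<leftarrow>es. [:- a, 1:])" using char_poly_factorized[OF F] by auto
  obtain J P Q where sd: "schur_decomposition F es = (J, P, Q)" by (cases "schur_decomposition F es") auto
  from schur_decomposition[OF F es sd]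
  have sim: "similar_mat_wit F J P Q" and ut: "upper_triangular J" and dg: "diag_mat J = es" by auto
  from sim F have c: "P \<in> carrier_mat \<nu> \<nu>" "J \<in> carrier_mat \<nu> \<nu>" "Q \<in> carrier_mat \<nu> \<nu>"
    "P * Q = 1\<^sub>m \<nu>" "Q * P = 1\<^sub>m \<nu>" "F = P * J * Q"
    unfolding similar_mat_wit_def Let_def by auto
  have "J $$ (j,j) \<in> eig F" if j: "j < \<nu>" for j
  proof -
    have "J $$ (j,j) \<in> set es" using dg j c(2) unfolding diag_mat_def by auto
    then have "poly (char_poly F) (J $$ (j,j)) = 0" unfolding es by (rule linear_poly_root)
    then show ?thesis unfolding eig_def using eigenvalue_root_char_poly[OF F] by auto
  qed
  with c ut that show ?thesis by blast
qed

lemma sim_helper1: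
  fixes X P J Q :: "'a :: comm_ring_1 mat"
  assumes X: "X \<in> carrier_mat n \<nu>" and c: "P \<in> carrier_mat \<nu> \<nu>" "J \<in> carrier_mat \<nu> \<nu>" "Q \<in> carrier_mat \<nu> \<nu>"
    and QP: "Q * P = 1\<^sub>m \<nu>"
  shows "X * (P * J * Q) * P = X * P * J"
proof -
  have PJ: "P * J \<in> carrier_mat \<nu> \<nu>" using c by auto
  have PJQ: "P * J * Q \<in> carrier_mat \<nu> \<nu>" using c by auto
  have "P * J * Q * P = P * J * (Q * P)" using assoc_mult_mat[OF PJ c(3,1)] .
  also have "\<dots> = P * J" using c QP by simp
  finally have e: "P * J * Q * P = P * J" .
  have "X * (P * J * Q) * P = X * (P * J * Q * P)" using assoc_mult_mat[OF X PJQ c(1)] .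
  also have "\<dots> = X * (P * J)" using e by simp
  also have "\<dots> = X * P * J" using assoc_mult_mat[OF X c(1,2)] by simp
  finally show ?thesis .
qed

lemma sim_helper2:
  fixes X P J Q :: "'a :: comm_ring_1 mat"
  assumes X: "X \<in> carrier_mat n \<nu>" and c: "P \<in> carrier_mat \<nu> \<nu>" "J \<in> carrier_mat \<nu> \<nu>" "Q \<in> carrier_mat \<nu> \<nu>"
    and QP: "Q * P = 1\<^sub>m \<nu>"
  shows "X * Q * (P * J * Q) = X * J * Q"
proof -
  have PJ: "P * J \<in> carrier_mat \<nu> \<nu>" using c by auto
  have PJQ: "P * J * Q \<in> carrier_mat \<nu> \<nu>" using c by auto
  have "Q * (P * J * Q) = Q * (P * J) * Q" using assoc_mult_mat[OF c(3) PJ c(3)] by simp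
  also have "Q * (P * J) = Q * P * J" using assoc_mult_mat[OF c(3,1,2)] by simp
  also have "\<dots> = J" using c QP by simp
  finally have e: "Q * (P * J * Q) = J * Q" .
  have "X * Q * (P * J * Q) = X * (Q * (P * J * Q))" using assoc_mult_mat[OF X c(3) PJQ] .
  also have "\<dots> = X * (J * Q)" using e by simp
  also have "\<dots> = X * J * Q" using assoc_mult_mat[OF X c(2,3)] by simp
  finally show ?thesis .
qed

lemma gen_uniq:
  fixes F L1 L2 L3 L4 X Y :: "complex mat"
  assumes F: "F \<in> carrier_mat \<nu> \<nu>"
  and L: "L1 \<in> carrier_mat n n" "L2 \<in> carrier_mat n p" "L3 \<in> carrier_mat m n" "L4 \<in> carrier_mat m p"
  and kern: "\<And>lam x y. lam \<in> eig F \<Longrightarrow> x \<in> carrier_vec n \<Longrightarrow> y \<in> carrier_vec p \<Longrightarrow>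
      L1 *\<^sub>v x + L2 *\<^sub>v y = lam \<cdot>\<^sub>v x \<Longrightarrow> L3 *\<^sub>v x + L4 *\<^sub>v y = 0\<^sub>v m \<Longrightarrow> x = 0\<^sub>v n \<and> y = 0\<^sub>v p"
  and X: "X \<in> carrier_mat n \<nu>" and Y: "Y \<in> carrier_mat p \<nu>"
  and e1: "L1 * X + L2 * Y = X * F" and e2: "L3 * X + L4 * Y = 0\<^sub>m m \<nu>"
  shows "X = 0\<^sub>m n \<nu> \<and> Y = 0\<^sub>m p \<nu>"
proof -
  obtain P J Q where PJQ: "P \<in> carrier_mat \<nu> \<nu>" "J \<in> carrier_mat \<nu> \<nu>" "Q \<in> carrier_mat \<nu> \<nu>"
    "P * Q = 1\<^sub>m \<nu>" "Q * P = 1\<^sub>m \<nu>" "F = P * J * Q" "upper_triangular J"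
    "\<And>j. j < \<nu> \<Longrightarrow> J $$ (j,j) \<in> eig F" using schur_complex[OF F] by blast
  have XP: "X * P \<in> carrier_mat n \<nu>" and YP: "Y * P \<in> carrier_mat p \<nu>" using X Y PJQ by auto
  have "L1 * (X * P) + L2 * (Y * P) = (L1 * X + L2 * Y) * P"
    using add_mult_distrib_mat[of "L1 * X" n \<nu> "L2 * Y" P \<nu>] assoc_mult_mat[OF L(1) X PJQ(1)]
      assoc_mult_mat[OF L(2) Y PJQ(1)] L X Y PJQ(1) by auto
  also have "\<dots> = X * F * P" using e1 by simp
  also have "\<dots> = X * P * J" using sim_helper1[OF X PJQ(1-3,5)] PJQ(6) by simp
  finally have e1': "L1 * (X * P) + L2 * (Y * P) = X * P * J" .
  have "L3 * (X * P) + L4 * (Y * P) = (L3 * X + L4 * Y) * P"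
    using add_mult_distrib_mat[of "L3 * X" m \<nu> "L4 * Y" P \<nu>] assoc_mult_mat[OF L(3) X PJQ(1)]
      assoc_mult_mat[OF L(4) Y PJQ(1)] L X Y PJQ(1) by auto
  also have "\<dots> = 0\<^sub>m m \<nu>" using e2 PJQ by simp
  finally have e2': "L3 * (X * P) + L4 * (Y * P) = 0\<^sub>m m \<nu>" .
  have z: "X * P = 0\<^sub>m n \<nu> \<and> Y * P = 0\<^sub>m p \<nu>"
    by (rule tri_uniq[OF PJQ(2,7) L _ XP YP e1' e2']) (rule kern[OF PJQ(8)], auto)
  have "X = X * P * Q" using X PJQ by (simp add: assoc_mult_mat)
  moreover have "Y = Y * P * Q" using Y PJQ by (simp add: assoc_mult_mat)
  ultimately show ?thesis using z PJQ by auto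
qed

lemma gen_exist:
  fixes F L1 L2 L3 L4 T1 T2 :: "complex mat"
  assumes F: "F \<in> carrier_mat \<nu> \<nu>"
  and L: "L1 \<in> carrier_mat n n" "L2 \<in> carrier_mat n p" "L3 \<in> carrier_mat m n" "L4 \<in> carrier_mat m p"
  and surj: "\<And>lam b1 b2. lam \<in> eig F \<Longrightarrow> b1 \<in> carrier_vec n \<Longrightarrow> b2 \<in> carrier_vec m \<Longrightarrow>
      \<exists>x\<in>carrier_vec n. \<exists>y\<in>carrier_vec p.
      L1 *\<^sub>v x + L2 *\<^sub>v y = lam \<cdot>\<^sub>v x + b1 \<and> L3 *\<^sub>v x + L4 *\<^sub>v y = b2"
  and T: "T1 \<in> carrier_mat n \<nu>" "T2 \<in> carrier_mat m \<nu>"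
  shows "\<exists>X\<in>carrier_mat n \<nu>. \<exists>Y\<in>carrier_mat p \<nu>. L1 * X + L2 * Y = X * F + T1 \<and> L3 * X + L4 * Y = T2"
proof -
  obtain P J Q where PJQ: "P \<in> carrier_mat \<nu> \<nu>" "J \<in> carrier_mat \<nu> \<nu>" "Q \<in> carrier_mat \<nu> \<nu>"
    "P * Q = 1\<^sub>m \<nu>" "Q * P = 1\<^sub>m \<nu>" "F = P * J * Q" "upper_triangular J"
    "\<And>j. j < \<nu> \<Longrightarrow> J $$ (j,j) \<in> eig F" using schur_complex[OF F] by blast
  have TP: "T1 * P \<in> carrier_mat n \<nu>" "T2 * P \<in> carrier_mat m \<nu>" using T PJQ by auto
  obtain X Y where XY: "X \<in> carrier_mat n \<nu>" "Y \<in> carrier_mat p \<nu>"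
     "L1 * X + L2 * Y = X * J + T1 * P" "L3 * X + L4 * Y = T2 * P"
    using tri_exist[OF PJQ(2,7) L _ TP] surj[OF PJQ(8)] by blast
  show ?thesis
  proof (intro bexI conjI)
    have "L1 * (X * Q) + L2 * (Y * Q) = (L1 * X + L2 * Y) * Q"
      using add_mult_distrib_mat[of "L1 * X" n \<nu> "L2 * Y" Q \<nu>] assoc_mult_mat[OF L(1) XY(1) PJQ(3)]
        assoc_mult_mat[OF L(2) XY(2) PJQ(3)] L XY(1,2) PJQ(3) by auto
    also have "\<dots> = X * J * Q + T1 * P * Q"
      using add_mult_distrib_mat[of "X * J" n \<nu> "T1 * P" Q \<nu>] XY(1,3) T PJQ(1-3) by auto
    also have "T1 * P * Q = T1" using T PJQ assoc_mult_mat[OF T(1) PJQ(1) PJQ(3)] by simp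
    also have "X * J * Q = X * Q * F" using sim_helper2[OF XY(1) PJQ(1-3,5)] PJQ(6) by simp
    finally show "L1 * (X * Q) + L2 * (Y * Q) = X * Q * F + T1" .
    have "L3 * (X * Q) + L4 * (Y * Q) = (L3 * X + L4 * Y) * Q"
      using add_mult_distrib_mat[of "L3 * X" m \<nu> "L4 * Y" Q \<nu>] assoc_mult_mat[OF L(3) XY(1) PJQ(3)]
        assoc_mult_mat[OF L(4) XY(2) PJQ(3)] L XY(1,2) PJQ(3) by auto
    also have "\<dots> = T2" using XY(4) PJQ T assoc_mult_mat[OF T(2) PJQ(1) PJQ(3)] by simp
    finally show "L3 * (X * Q) + L4 * (Y * Q) = T2" .
  qed (use XY PJQ in auto)
qed

lemma eig_iff:
  fixes A :: "complex mat" assumes A: "A \<in> carrier_mat n n"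
  shows "lam \<in> eig A \<longleftrightarrow> (\<exists>v\<in>carrier_vec n. v \<noteq> 0\<^sub>v n \<and> A *\<^sub>v v = lam \<cdot>\<^sub>v v)"
  using A unfolding eig_def eigenvalue_def eigenvector_def by auto

lemma eig_transpose:
  fixes A :: "complex mat" assumes A: "A \<in> carrier_mat n n"
  shows "eig (transpose_mat A) = eig A"
proof -
  have At: "transpose_mat A \<in> carrier_mat n n" using A by auto
  show ?thesis unfolding eig_def
    using eigenvalue_root_char_poly[OF A] eigenvalue_root_char_poly[OF At] char_poly_transpose_mat[OF A]
    by auto
qed

lemma full_col_rank_iff:
  fixes R :: "complex mat" assumes R: "R \<in> carrier_mat r c"
  shows "full_col_rank R \<longleftrightarrow> (\<forall>v\<in>carrier_vec c. R *\<^sub>v v = 0\<^sub>v r \<longrightarrow> v = 0\<^sub>v c)"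
proof -
  interpret vec_space "TYPE(complex)" r .
  have fcr: "full_col_rank R \<longleftrightarrow> rank R = c" unfolding full_col_rank_def using R by auto
  have distinct_if: "distinct (cols R)" if K: "\<forall>v::complex vec\<in>carrier_vec c. R *\<^sub>v v = 0\<^sub>v r \<longrightarrow> v = 0\<^sub>v c"
  proof (rule ccontr)
    assume "\<not> distinct (cols R)"
    then obtain i j where ij: "i \<noteq> j" "cols R ! i = cols R ! j" "i < length (cols R)" "j < length (cols R)"
      using distinct_conv_nth by blast
    then have ij': "i < c" "j < c" "col R i = col R j" using R by auto
    define v :: "complex vec" where "v = unit_vec c i - unit_vec c j"
    have v: "v \<in> carrier_vec c" unfolding v_def by auto
    have "R *\<^sub>v v = 0\<^sub>v r"
    proof (rule eq_vecI)
      fix k assume "k < dim_vec (0\<^sub>v r :: complex vec)"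
      then have k: "k < r" by auto
      have "(R *\<^sub>v v) $ k = row R k \<bullet> v" using R k by auto
      also have "\<dots> = row R k \<bullet> unit_vec c i - row R k \<bullet> unit_vec c j"
        unfolding v_def using R by (subst scalar_prod_minus_distrib[of _ c]) auto
      also have "\<dots> = R $$ (k, i) - R $$ (k, j)" using ij' R k by auto
      also have "\<dots> = 0"
      proof -
        have a: "R $$ (k,i) = col R i $ k" "R $$ (k,j) = col R j $ k" using R k ij'(1,2) by auto
        show ?thesis unfolding a ij'(3) by simp
      qed
      finally show "(R *\<^sub>v v) $ k = 0\<^sub>v r $ k" using k by simp
    qed (use R in auto)
    moreover have "v \<noteq> 0\<^sub>v c"
    proof
      assume "v = 0\<^sub>v c"
      then have "v $ i = 0" using ij' by simp
      then show False unfolding v_def using ij ij' by auto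
    qed
    ultimately show False using K v by auto
  qed
  show ?thesis
  proof
    assume "full_col_rank R"
    then have rk: "rank R = c" using fcr by auto
    have dist: "distinct (cols R)"
    proof (rule ccontr)
      assume nd: "\<not> distinct (cols R)"
      have "lin_indpt {}" by (rule finite_lin_indpt2) auto
      then have P0: "{} \<subseteq> set (cols R) \<and> lin_indpt {}" by simp
      have Pfin: "finite T \<and> card T \<le> card (set (cols R))" if "T \<subseteq> set (cols R) \<and> lin_indpt T" for T
        using that by (meson List.finite_set card_mono rev_finite_subset)
      obtain S where S: "maximal S (\<lambda>T. T \<subseteq> set (cols R) \<and> lin_indpt T)"
        using maximal_exists[of "(\<lambda>T. T \<subseteq> set (cols R) \<and> lin_indpt T)" "card (set (cols R))" "{}", OF Pfin P0]
        by blast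
      then have "card S \<le> card (set (cols R))" by (simp add: card_mono maximal_def)
      moreover have "card (set (cols R)) < c"
      proof -
        have "card (set (cols R)) \<le> length (cols R)" by (rule card_length)
        moreover have "card (set (cols R)) \<noteq> length (cols R)" using nd card_distinct by blast
        moreover have "length (cols R) = c" using R by auto
        ultimately show ?thesis by linarith
      qed
      ultimately have "card S < c" by auto
      then show False using rank_card_indpt[OF R S] rk by auto
    qed
    have li: "lin_indpt (set (cols R))" using full_rank_lin_indpt[OF R rk dist] .
    show "\<forall>v::complex vec\<in>carrier_vec c. R *\<^sub>v v = 0\<^sub>v r \<longrightarrow> v = 0\<^sub>v c"
    proof (intro ballI impI, rule ccontr)
      fix v assume "v \<in> carrier_vec c" "R *\<^sub>v v = 0\<^sub>v r" "v \<noteq> 0\<^sub>v c"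
      from lin_depI[OF R this(1) this(3) this(2) dist] li show False by auto
    qed
  next
    assume K: "\<forall>v::complex vec\<in>carrier_vec c. R *\<^sub>v v = 0\<^sub>v r \<longrightarrow> v = 0\<^sub>v c"
    have dist: "distinct (cols R)" using distinct_if[OF K] .
    have "lin_indpt (set (cols R))"
    proof
      assume ld: "lin_dep (set (cols R))"
      obtain v where "v \<in> carrier_vec c" "v \<noteq> 0\<^sub>v c" "R *\<^sub>v v = 0\<^sub>v r"
        by (rule lin_depE[OF R ld dist])
      with K show False by simp
    qed
    then show "full_col_rank R" using lin_indpt_full_rank[OF R dist] fcr by auto
  qed
qed

lemma sq_inj_surj:
  fixes A :: "complex mat" assumes A: "A \<in> carrier_mat n n"
  and K: "\<And>v. v \<in> carrier_vec n \<Longrightarrow> A *\<^sub>v v = 0\<^sub>v n \<Longrightarrow> v = 0\<^sub>v n"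
  and b: "b \<in> carrier_vec n"
  shows "\<exists>x\<in>carrier_vec n. A *\<^sub>v x = b"
proof -
  have "det A \<noteq> 0"
  proof
    assume "det A = 0"
    then obtain v where "v \<in> carrier_vec n" "v \<noteq> 0\<^sub>v n" "A *\<^sub>v v = 0\<^sub>v n"
      using det_0_iff_vec_prod_zero_field[OF A] by blast
    with K show False by blast
  qed
  from det_non_zero_imp_unit[OF A this, of "()"]
  have "\<exists>B\<in>carrier_mat n n. B * A = 1\<^sub>m n \<and> A * B = 1\<^sub>m n"
    unfolding Units_def ring_mat_simps by simp
  then obtain B where B: "B \<in> carrier_mat n n" "A * B = 1\<^sub>m n" by blast
  show ?thesis
  proof (intro bexI)
    show "A *\<^sub>v (B *\<^sub>v b) = b" using assoc_mult_mat_vec[OF A B(1) b, symmetric] B b by simp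
  qed (use B b in auto)
qed

lemma conj_mat_vec:
  fixes R :: "complex mat" assumes R: "R \<in> carrier_mat r c" and v: "v \<in> carrier_vec c"
  shows "map_mat conjugate R *\<^sub>v v = conjugate (R *\<^sub>v conjugate v)"
proof (rule eq_vecI)
  fix k assume "k < dim_vec (conjugate (R *\<^sub>v conjugate v))"
  then have k: "k < r" using R by auto
  have rw: "row (map_mat conjugate R) k = conjugate (row R k)" using R k by (auto intro!: eq_vecI)
  have "conjugate (R *\<^sub>v conjugate v) $ k = conjugate (row R k \<bullet> conjugate v)" using R k by auto
  also have "\<dots> = conjugate (row R k) \<bullet> conjugate (conjugate v)"
    using R v k by (intro conjugate_sprod_vec[of _ c]) auto
  also have "\<dots> = (map_mat conjugate R *\<^sub>v v) $ k" using rw R k by (simp add: conjugate_id)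
  finally show "(map_mat conjugate R *\<^sub>v v) $ k = conjugate (R *\<^sub>v conjugate v) $ k" by simp
qed (use R in auto)

lemma transpose_surj:
  fixes R :: "complex mat" assumes R: "R \<in> carrier_mat r c"
  and K: "\<And>v. v \<in> carrier_vec c \<Longrightarrow> R *\<^sub>v v = 0\<^sub>v r \<Longrightarrow> v = 0\<^sub>v c"
  and b: "b \<in> carrier_vec c"
  shows "\<exists>w\<in>carrier_vec r. transpose_mat R *\<^sub>v w = b"
proof -
  define Rc where "Rc = map_mat conjugate R"
  have Rc: "Rc \<in> carrier_mat r c" unfolding Rc_def using R by auto
  have Rt: "transpose_mat R \<in> carrier_mat c r" using R by auto
  have KK: "v = 0\<^sub>v c" if v: "v \<in> carrier_vec c" and z: "(transpose_mat R * Rc) *\<^sub>v v = 0\<^sub>v c" for v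
  proof -
    define u where "u = R *\<^sub>v conjugate v"
    have u: "u \<in> carrier_vec r" unfolding u_def using R v by auto
    have cv: "conjugate v \<in> carrier_vec c" using v by auto
    have "Rc *\<^sub>v v = conjugate u" unfolding Rc_def u_def by (rule conj_mat_vec[OF R v])
    then have z2: "transpose_mat R *\<^sub>v conjugate u = 0\<^sub>v c"
      using z assoc_mult_mat_vec[OF Rt Rc v] by simp
    have cu: "conjugate u \<in> carrier_vec r" using u by (rule carrier_vec_conjugate)
    have "0 = (transpose_mat R *\<^sub>v conjugate u) \<bullet> conjugate v" using z2 cv by simp
    also have "\<dots> = conjugate u \<bullet> u" unfolding u_def
      by (rule transpose_vec_mult_scalar[OF R cv]) (use cu in \<open>simp add: u_def\<close>)
    also have "\<dots> = u \<bullet>c u" by (rule comm_scalar_prod[OF cu u])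
    finally have "u \<bullet>c u = 0" by simp
    then have "u = 0\<^sub>v r" using u by simp
    then have "conjugate v = 0\<^sub>v c" using K[OF cv] unfolding u_def by simp
    then show "v = 0\<^sub>v c" by simp
  qed
  have KC: "transpose_mat R * Rc \<in> carrier_mat c c" using Rt Rc by auto
  obtain x where x: "x \<in> carrier_vec c" "(transpose_mat R * Rc) *\<^sub>v x = b"
    using sq_inj_surj[OF KC KK b] by auto
  have "transpose_mat R *\<^sub>v (Rc *\<^sub>v x) = b"
    using x(2) assoc_mult_mat_vec[OF Rt Rc x(1)] by simp
  moreover have "Rc *\<^sub>v x \<in> carrier_vec r" using Rc by (rule mult_mat_vec_carrier) (rule x(1))
  ultimately show ?thesis by blast
qed

lemma smult_one_mult_vec:
  fixes A :: "complex mat" assumes A: "A \<in> carrier_mat n n" and x: "x \<in> carrier_vec n"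
  shows "(A - lam \<cdot>\<^sub>m 1\<^sub>m n) *\<^sub>v x = A *\<^sub>v x - lam \<cdot>\<^sub>v x"
proof -
  have "(A - lam \<cdot>\<^sub>m 1\<^sub>m n) *\<^sub>v x = A *\<^sub>v x - (lam \<cdot>\<^sub>m 1\<^sub>m n) *\<^sub>v x"
    using A x by (intro minus_mult_distrib_mat_vec) auto
  also have "(lam \<cdot>\<^sub>m 1\<^sub>m n) *\<^sub>v x = lam \<cdot>\<^sub>v x"
  proof (rule eq_vecI)
    fix i assume "i < dim_vec (lam \<cdot>\<^sub>v x)"
    then have i: "i < n" using x by auto
    have "((lam \<cdot>\<^sub>m 1\<^sub>m n) *\<^sub>v x) $ i = (\<Sum>ia = 0..<n. lam * (if ia = i then 1 else 0) * x $ ia)"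
      using i x by (auto simp: scalar_prod_def)
    also have "\<dots> = (\<Sum>k\<in>{0..<n}. (if k = i then lam * x $ k else 0))"
      by (rule sum.cong) auto
    also have "\<dots> = lam * x $ i" using i by simp
    finally show "((lam \<cdot>\<^sub>m 1\<^sub>m n) *\<^sub>v x) $ i = (lam \<cdot>\<^sub>v x) $ i" using i x by simp
  qed (use x in auto)
  finally show ?thesis .
qed

lemma vec0_eq: "(v :: 'a vec) \<in> carrier_vec 0 \<Longrightarrow> w \<in> carrier_vec 0 \<Longrightarrow> v = w"
  by (intro eq_vecI) auto

lemma mat0_eq: "(X :: 'a mat) \<in> carrier_mat 0 k \<Longrightarrow> Y \<in> carrier_mat 0 k \<Longrightarrow> X = Y"
  by (intro eq_matI) auto

lemma mat_diff_eq:
  fixes A1 A2 B1 B2 X :: "'a :: ab_group_add mat"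
  assumes c: "A1 \<in> carrier_mat n k" "A2 \<in> carrier_mat n k" "B1 \<in> carrier_mat n k" "B2 \<in> carrier_mat n k"
    and e1: "B1 - A1 = X" and e2: "B2 - A2 = X"
  shows "A1 - A2 = B1 - B2"
proof (rule eq_matI)
  fix i j assume "i < dim_row (B1 - B2)" "j < dim_col (B1 - B2)"
  then have ij: "i < n" "j < k" using c by auto
  have "(B1 - A1) $$ (i,j) = (B2 - A2) $$ (i,j)" using e1 e2 by simp
  then have "B1 $$ (i,j) - A1 $$ (i,j) = B2 $$ (i,j) - A2 $$ (i,j)" using c ij by simp
  then show "(A1 - A2) $$ (i,j) = (B1 - B2) $$ (i,j)" using c ij by (simp add: algebra_simps)
qed (use c in auto)

lemma sylvester:
  fixes A F X :: "complex mat"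
  assumes A: "A \<in> carrier_mat n n" and F: "F \<in> carrier_mat \<nu> \<nu>" and disj: "eig A \<inter> eig F = {}"
    and X: "X \<in> carrier_mat n \<nu>"
  shows "\<exists>!Pi. Pi \<in> carrier_mat n \<nu> \<and> Pi * F - A * Pi = X"
proof -
  have Z: "(0\<^sub>m n 0 :: complex mat) \<in> carrier_mat n 0" "(0\<^sub>m 0 n :: complex mat) \<in> carrier_mat 0 n"
    "(0\<^sub>m 0 0 :: complex mat) \<in> carrier_mat 0 0" by auto
  have noev: "v = 0\<^sub>v n" if "lam \<in> eig F" "v \<in> carrier_vec n" "A *\<^sub>v v = lam \<cdot>\<^sub>v v" for lam v
    using that disj eig_iff[OF A, of lam] by blast
  have ex: "\<exists>Pi\<in>carrier_mat n \<nu>. \<exists>Y\<in>carrier_mat 0 \<nu>. A * Pi + 0\<^sub>m n 0 * Y = Pi * F + (- X) \<and>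
       0\<^sub>m 0 n * Pi + 0\<^sub>m 0 0 * Y = 0\<^sub>m 0 \<nu>"
  proof (rule gen_exist[OF F A Z])
    fix lam and b1 b2 :: "complex vec" assume lam: "lam \<in> eig F" and b1: "b1 \<in> carrier_vec n" and b2: "b2 \<in> carrier_vec (0::nat)"
    have Al: "A - lam \<cdot>\<^sub>m 1\<^sub>m n \<in> carrier_mat n n" using A by auto
    have K': "v = 0\<^sub>v n" if v: "v \<in> carrier_vec n" and z: "(A - lam \<cdot>\<^sub>m 1\<^sub>m n) *\<^sub>v v = 0\<^sub>v n" for v
    proof -
      have "A *\<^sub>v v - lam \<cdot>\<^sub>v v = 0\<^sub>v n" using z smult_one_mult_vec[OF A v] by simp
      then have "A *\<^sub>v v = lam \<cdot>\<^sub>v v" using A v by (intro eq_vecI) (auto simp: vec_eq_iff)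
      then show ?thesis using noev[OF lam v] by simp
    qed
    obtain x where x: "x \<in> carrier_vec n" "(A - lam \<cdot>\<^sub>m 1\<^sub>m n) *\<^sub>v x = b1"
      using sq_inj_surj[OF Al K' b1] by blast
    have "A *\<^sub>v x = lam \<cdot>\<^sub>v x + b1"
      using x smult_one_mult_vec[OF A x(1), of lam] A b1 by (intro eq_vecI) auto
    then show "\<exists>x\<in>carrier_vec n. \<exists>y\<in>carrier_vec 0. A *\<^sub>v x + 0\<^sub>m n 0 *\<^sub>v y = lam \<cdot>\<^sub>v x + b1 \<and>
        0\<^sub>m 0 n *\<^sub>v x + 0\<^sub>m 0 0 *\<^sub>v y = b2"
      using x b2 A by (intro bexI[of _ x] bexI[of _ "0\<^sub>v 0"]) (auto intro: vec0_eq)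
  qed (use X in auto)
  then obtain Pi Y where PY: "Pi \<in> carrier_mat n \<nu>" "Y \<in> carrier_mat 0 \<nu>"
    "A * Pi + 0\<^sub>m n 0 * Y = Pi * F + (- X)" by blast
  have "Pi * F - A * Pi = X"
  proof -
    have "A * Pi = Pi * F + (- X)" using PY left_mult_zero_mat[OF PY(2), of n] A by simp
    then show ?thesis using PY A F X by (intro eq_matI) (auto simp: mat_eq_iff)
  qed
  then have exi: "\<exists>Pi. Pi \<in> carrier_mat n \<nu> \<and> Pi * F - A * Pi = X" using PY by auto
  have uni: "P1 = P2" if P1: "P1 \<in> carrier_mat n \<nu>" "P1 * F - A * P1 = X"
     and P2: "P2 \<in> carrier_mat n \<nu>" "P2 * F - A * P2 = X" for P1 P2
  proof -
    let ?Z = "P1 - P2"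
    have Zc: "?Z \<in> carrier_mat n \<nu>" using P1(1) P2(1) by auto
    have "A * ?Z + 0\<^sub>m n 0 * 0\<^sub>m 0 \<nu> = ?Z * F"
    proof -
      have e1: "?Z * F = P1 * F - P2 * F" using P1 P2 F by (intro minus_mult_distrib_mat) auto
      have e2: "A * ?Z = A * P1 - A * P2" using P1 P2 A by (intro mult_minus_distrib_mat) auto
      have "A * ?Z = ?Z * F" unfolding e1 e2
        by (rule mat_diff_eq[OF _ _ _ _ P1(2) P2(2)]) (use P1 P2 A F in auto)
      then show ?thesis using A F Zc by (simp add: right_add_zero_mat[of _ n \<nu>])
    qed
    moreover have "0\<^sub>m 0 n * ?Z + 0\<^sub>m 0 0 * 0\<^sub>m 0 \<nu> = 0\<^sub>m 0 \<nu>" by (intro mat0_eq) auto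
    moreover have "x = 0\<^sub>v n \<and> y = 0\<^sub>v 0" if "lam \<in> eig F" "x \<in> carrier_vec n" "y \<in> carrier_vec 0"
      "A *\<^sub>v x + 0\<^sub>m n 0 *\<^sub>v y = lam \<cdot>\<^sub>v x" "0\<^sub>m 0 n *\<^sub>v x + 0\<^sub>m 0 0 *\<^sub>v y = 0\<^sub>v 0" for lam and x y :: "complex vec"
    proof -
      have "0\<^sub>m n 0 *\<^sub>v y = 0\<^sub>v n" using that(3) by (intro eq_vecI) (auto simp: scalar_prod_def)
      then have "A *\<^sub>v x = lam \<cdot>\<^sub>v x" using that(4) A that(2) by simp
      then show ?thesis using noev[OF that(1,2)] vec0_eq[OF that(3)] by auto
    qed
    ultimately have "?Z = 0\<^sub>m n \<nu> \<and> (0\<^sub>m 0 \<nu> :: complex mat) = 0\<^sub>m 0 \<nu>"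
      by (intro gen_uniq[OF F A Z _ Zc, of "0\<^sub>m 0 \<nu>"]) auto
    then show ?thesis using P1 P2 by (intro eq_matI) (auto simp: mat_eq_iff)
  qed
  from exi uni show ?thesis by blast
qed

lemma transpose_inj_mat: "transpose_mat X = transpose_mat Y \<Longrightarrow> X = Y"
  by (metis transpose_transpose)

lemma trans_syl_iff:
  fixes M A F Y :: "complex mat"
  assumes M: "M \<in> carrier_mat \<nu> n" and A: "A \<in> carrier_mat n n" and F: "F \<in> carrier_mat \<nu> \<nu>"
    and Y: "Y \<in> carrier_mat \<nu> n"
  shows "(M * A - F * M = Y) \<longleftrightarrow>
    (transpose_mat M * transpose_mat F - transpose_mat A * transpose_mat M = - transpose_mat Y)"
proof -
  have t: "transpose_mat (M * A - F * M) = transpose_mat A * transpose_mat M - transpose_mat M * transpose_mat F"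
    using M A F by (simp add: transpose_minus[of _ \<nu> n] transpose_mult[of _ \<nu> n] transpose_mult[of _ \<nu> \<nu>])
  have "(M * A - F * M = Y) \<longleftrightarrow> transpose_mat (M * A - F * M) = transpose_mat Y"
    using transpose_inj_mat by auto
  also have "\<dots> \<longleftrightarrow> transpose_mat A * transpose_mat M - transpose_mat M * transpose_mat F = transpose_mat Y"
    unfolding t ..
  also have "\<dots> \<longleftrightarrow> transpose_mat M * transpose_mat F - transpose_mat A * transpose_mat M = - transpose_mat Y"
    using M A F Y by (auto simp: mat_eq_iff algebra_simps)
  finally show ?thesis .
qed

lemma sylvester_left:
  fixes A F Y :: "complex mat"
  assumes A: "A \<in> carrier_mat n n" and F: "F \<in> carrier_mat \<nu> \<nu>" and disj: "eig A \<inter> eig F = {}"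
    and Y: "Y \<in> carrier_mat \<nu> n"
  shows "\<exists>!M. M \<in> carrier_mat \<nu> n \<and> M * A - F * M = Y"
proof -
  have At: "transpose_mat A \<in> carrier_mat n n" and Ft: "transpose_mat F \<in> carrier_mat \<nu> \<nu>" using A F by auto
  have dj: "eig (transpose_mat A) \<inter> eig (transpose_mat F) = {}"
    using disj eig_transpose[OF A] eig_transpose[OF F] by simp
  have Yt: "- transpose_mat Y \<in> carrier_mat n \<nu>" using Y by auto
  from sylvester[OF At Ft dj Yt] obtain Pi where Pi: "Pi \<in> carrier_mat n \<nu>"
    "Pi * transpose_mat F - transpose_mat A * Pi = - transpose_mat Y"
    and uq: "\<And>P'. P' \<in> carrier_mat n \<nu> \<and> P' * transpose_mat F - transpose_mat A * P' = - transpose_mat Y \<Longrightarrow> P' = Pi"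
    by blast
  show ?thesis
  proof (rule ex1I[of _ "transpose_mat Pi"])
    have Mc: "transpose_mat Pi \<in> carrier_mat \<nu> n" using Pi by auto
    show "transpose_mat Pi \<in> carrier_mat \<nu> n \<and> transpose_mat Pi * A - F * transpose_mat Pi = Y"
      using trans_syl_iff[OF Mc A F Y] Pi Mc by simp
  next
    fix M assume M: "M \<in> carrier_mat \<nu> n \<and> M * A - F * M = Y"
    then have "transpose_mat M = Pi" using trans_syl_iff[OF _ A F Y, of M] uq[of "transpose_mat M"] by auto
    then show "M = transpose_mat Pi" by (metis transpose_transpose)
  qed
qed

definition outer :: "complex vec \<Rightarrow> complex vec \<Rightarrow> complex mat" where
  "outer x w = mat (dim_vec x) (dim_vec w) (\<lambda>(i,j). x $ i * w $ j)"

lemma outer_carrier[simp]: "x \<in> carrier_vec a \<Longrightarrow> w \<in> carrier_vec b \<Longrightarrow> outer x w \<in> carrier_mat a b"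
  unfolding outer_def by auto

lemma outer_index[simp]: "i < dim_vec x \<Longrightarrow> j < dim_vec w \<Longrightarrow> outer x w $$ (i,j) = x $ i * w $ j"
  "dim_row (outer x w) = dim_vec x" "dim_col (outer x w) = dim_vec w"
  unfolding outer_def by auto

lemma mult_outer:
  assumes M: "M \<in> carrier_mat k a" and x: "x \<in> carrier_vec a" and w: "w \<in> carrier_vec b"
  shows "M * outer x w = outer (M *\<^sub>v x) w"
proof (rule eq_matI)
  fix i j assume ij: "i < dim_row (outer (M *\<^sub>v x) w)" "j < dim_col (outer (M *\<^sub>v x) w)"
  then have i: "i < k" and j: "j < b" using M w by auto
  have "(M * outer x w) $$ (i,j) = (\<Sum>l = 0..<a. M $$ (i,l) * (x $ l * w $ j))"
    using M x w i j by (auto simp: scalar_prod_def intro!: sum.cong)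
  also have "\<dots> = (\<Sum>l = 0..<a. M $$ (i,l) * x $ l) * w $ j"
    by (simp add: sum_distrib_right mult.assoc)
  also have "\<dots> = outer (M *\<^sub>v x) w $$ (i,j)"
    using M x w i j by (auto simp: scalar_prod_def intro!: sum.cong)
  finally show "(M * outer x w) $$ (i,j) = outer (M *\<^sub>v x) w $$ (i,j)" .
qed (use M w in auto)

lemma outer_mult:
  assumes x: "x \<in> carrier_vec a" and w: "w \<in> carrier_vec b" and F: "F \<in> carrier_mat b b"
  shows "outer x w * F = outer x (transpose_mat F *\<^sub>v w)"
proof (rule eq_matI)
  fix i j assume ij: "i < dim_row (outer x (transpose_mat F *\<^sub>v w))" "j < dim_col (outer x (transpose_mat F *\<^sub>v w))"
  then have i: "i < a" and j: "j < b" using x F by auto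
  have "(outer x w * F) $$ (i,j) = (\<Sum>l = 0..<b. x $ i * w $ l * F $$ (l,j))"
    using F x w i j by (auto simp: scalar_prod_def intro!: sum.cong)
  also have "\<dots> = x $ i * (\<Sum>l = 0..<b. F $$ (l,j) * w $ l)"
    by (simp add: sum_distrib_left mult_ac)
  also have "\<dots> = outer x (transpose_mat F *\<^sub>v w) $$ (i,j)"
    using F x w i j by (auto simp: scalar_prod_def intro!: sum.cong)
  finally show "(outer x w * F) $$ (i,j) = outer x (transpose_mat F *\<^sub>v w) $$ (i,j)" .
qed (use x F in auto)

lemma outer_add: "x \<in> carrier_vec a \<Longrightarrow> y \<in> carrier_vec a \<Longrightarrow> w \<in> carrier_vec b \<Longrightarrow>
  outer (x + y) w = outer x w + outer y w"
  by (intro eq_matI) (auto simp: algebra_simps)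

lemma outer_smult: "x \<in> carrier_vec a \<Longrightarrow> w \<in> carrier_vec b \<Longrightarrow>
  outer (c \<cdot>\<^sub>v x) w = outer x (c \<cdot>\<^sub>v w)"
  by (intro eq_matI) (auto simp: algebra_simps)

lemma outer_zero: "w \<in> carrier_vec b \<Longrightarrow> outer (0\<^sub>v a) w = 0\<^sub>m a b"
  by (intro eq_matI) auto

lemma outer_mult_vec:
  assumes x: "x \<in> carrier_vec a" and w: "w \<in> carrier_vec b" and v: "v \<in> carrier_vec b"
  shows "outer x w *\<^sub>v v = (w \<bullet> v) \<cdot>\<^sub>v x"
proof (rule eq_vecI)
  fix i assume "i < dim_vec ((w \<bullet> v) \<cdot>\<^sub>v x)"
  then have i: "i < a" using x by auto
  have "(outer x w *\<^sub>v v) $ i = (\<Sum>l = 0..<b. x $ i * w $ l * v $ l)"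
    using x w v i by (auto simp: scalar_prod_def intro!: sum.cong)
  also have "\<dots> = (w \<bullet> v) * x $ i" using w v by (simp add: scalar_prod_def sum_distrib_left sum_distrib_right mult_ac)
  finally show "(outer x w *\<^sub>v v) $ i = ((w \<bullet> v) \<cdot>\<^sub>v x) $ i" using i x by simp
qed (use x in auto)

lemma outer_nonzero:
  assumes x: "x \<in> carrier_vec a" and w: "w \<in> carrier_vec b" and x0: "x \<noteq> 0\<^sub>v a" and w0: "w \<noteq> 0\<^sub>v b"
  shows "outer x w \<noteq> 0\<^sub>m a b"
proof
  obtain i where i: "i < a" "x $ i \<noteq> 0" using x x0 by (auto simp: vec_eq_iff)
  obtain j where j: "j < b" "w $ j \<noteq> 0" using w w0 by (auto simp: vec_eq_iff)
  assume "outer x w = 0\<^sub>m a b"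
  then have "outer x w $$ (i,j) = 0" using i j by simp
  then show False using i j x w by simp
qed

lemma zero_append: "0\<^sub>v n @\<^sub>v 0\<^sub>v m = (0\<^sub>v (n + m) :: 'a :: zero vec)"
  by (intro eq_vecI) auto

lemma vec_move1:
  fixes a b c d :: "'a :: ab_group_add vec"
  assumes "a \<in> carrier_vec n" "b \<in> carrier_vec n" "c \<in> carrier_vec n" "d \<in> carrier_vec n"
  shows "a - b + c = d \<longleftrightarrow> a + c = b + d"
proof
  assume h: "a - b + c = d"
  show "a + c = b + d"
  proof (rule eq_vecI)
    fix i assume "i < dim_vec (b + d)"
    then have i: "i < n" using assms by auto
    have "(a - b + c) $ i = d $ i" using h by simp
    then show "(a + c) $ i = (b + d) $ i" using assms i by (simp add: algebra_simps)
  qed (use assms in auto)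
next
  assume h: "a + c = b + d"
  show "a - b + c = d"
  proof (rule eq_vecI)
    fix i assume "i < dim_vec d"
    then have i: "i < n" using assms by auto
    have "(a + c) $ i = (b + d) $ i" using h by simp
    then show "(a - b + c) $ i = d $ i" using assms i by (simp add: algebra_simps)
  qed (use assms in auto)
qed

context
  fixes A B C D :: "complex mat" and n m p :: nat
  assumes A: "A \<in> carrier_mat n n" and B: "B \<in> carrier_mat n m"
    and C: "C \<in> carrier_mat p n" and D: "D \<in> carrier_mat p m"
begin

lemma ros_carrier: "rosenbrock A B C D lam \<in> carrier_mat (n + p) (n + m)"
  unfolding rosenbrock_def using A B C D by auto

lemma ros_mult:
  assumes x: "x \<in> carrier_vec n" and u: "u \<in> carrier_vec m"
  shows "rosenbrock A B C D lam *\<^sub>v (x @\<^sub>v u) = (A *\<^sub>v x - lam \<cdot>\<^sub>v x + B *\<^sub>v u) @\<^sub>v (C *\<^sub>v x + D *\<^sub>v u)"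
proof -
  have Al: "A - lam \<cdot>\<^sub>m 1\<^sub>m n \<in> carrier_mat n n" using A by auto
  have "rosenbrock A B C D lam = four_block_mat (A - lam \<cdot>\<^sub>m 1\<^sub>m n) B C D"
    unfolding rosenbrock_def using A by simp
  then show ?thesis
    using four_block_mat_mult_vec[OF Al B C D x u] smult_one_mult_vec[OF A x] by simp
qed

definition Kc :: "complex \<Rightarrow> bool" where
  "Kc lam = (\<forall>x\<in>carrier_vec n. \<forall>u\<in>carrier_vec m.
     A *\<^sub>v x + B *\<^sub>v u = lam \<cdot>\<^sub>v x \<and> C *\<^sub>v x + D *\<^sub>v u = 0\<^sub>v p \<longrightarrow> x = 0\<^sub>v n \<and> u = 0\<^sub>v m)"

lemma ros_ker: "full_col_rank (rosenbrock A B C D lam) \<longleftrightarrow> Kc lam"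
proof -
  note R = ros_carrier[of lam]
  have eqv: "rosenbrock A B C D lam *\<^sub>v (x @\<^sub>v u) = 0\<^sub>v (n + p) \<longleftrightarrow>
      (A *\<^sub>v x + B *\<^sub>v u = lam \<cdot>\<^sub>v x \<and> C *\<^sub>v x + D *\<^sub>v u = 0\<^sub>v p)"
    if x: "x \<in> carrier_vec n" and u: "u \<in> carrier_vec m" for x u
  proof -
    have c1: "A *\<^sub>v x \<in> carrier_vec n" "lam \<cdot>\<^sub>v x \<in> carrier_vec n" "B *\<^sub>v u \<in> carrier_vec n"
      using A B x u by auto
    have "rosenbrock A B C D lam *\<^sub>v (x @\<^sub>v u) = 0\<^sub>v (n + p) \<longleftrightarrow>
        (A *\<^sub>v x - lam \<cdot>\<^sub>v x + B *\<^sub>v u) @\<^sub>v (C *\<^sub>v x + D *\<^sub>v u) = 0\<^sub>v n @\<^sub>v 0\<^sub>v p"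
      unfolding ros_mult[OF x u] zero_append ..
    also have "\<dots> \<longleftrightarrow> A *\<^sub>v x - lam \<cdot>\<^sub>v x + B *\<^sub>v u = 0\<^sub>v n \<and> C *\<^sub>v x + D *\<^sub>v u = 0\<^sub>v p"
      by (rule append_vec_eq[of _ n]) (use c1 in auto)
    also have "A *\<^sub>v x - lam \<cdot>\<^sub>v x + B *\<^sub>v u = 0\<^sub>v n \<longleftrightarrow> A *\<^sub>v x + B *\<^sub>v u = lam \<cdot>\<^sub>v x + 0\<^sub>v n"
      by (rule vec_move1) (use c1 in auto)
    also have "lam \<cdot>\<^sub>v x + 0\<^sub>v n = lam \<cdot>\<^sub>v x" using c1 by simp
    finally show ?thesis .
  qed
  show ?thesis
  proof
    assume fr: "full_col_rank (rosenbrock A B C D lam)"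
    show "Kc lam" unfolding Kc_def
    proof (intro ballI impI)
      fix x u assume x: "x \<in> carrier_vec n" and u: "u \<in> carrier_vec m"
        and h: "A *\<^sub>v x + B *\<^sub>v u = lam \<cdot>\<^sub>v x \<and> C *\<^sub>v x + D *\<^sub>v u = 0\<^sub>v p"
      have "rosenbrock A B C D lam *\<^sub>v (x @\<^sub>v u) = 0\<^sub>v (n + p)" using eqv[OF x u] h by simp
      moreover have "x @\<^sub>v u \<in> carrier_vec (n + m)" using x u by auto
      ultimately have "x @\<^sub>v u = 0\<^sub>v n @\<^sub>v 0\<^sub>v m"
        using fr full_col_rank_iff[OF R] zero_append by metis
      then show "x = 0\<^sub>v n \<and> u = 0\<^sub>v m" using append_vec_eq[OF x, of "0\<^sub>v n" u "0\<^sub>v m"] by simp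
    qed
  next
    assume K: "Kc lam"
    show "full_col_rank (rosenbrock A B C D lam)" unfolding full_col_rank_iff[OF R]
    proof (intro ballI impI)
      fix v assume v: "v \<in> carrier_vec (n + m)" and z: "rosenbrock A B C D lam *\<^sub>v v = 0\<^sub>v (n + p)"
      define x where "x = vec_first v n"
      define u where "u = vec_last v m"
      have x: "x \<in> carrier_vec n" and u: "u \<in> carrier_vec m" unfolding x_def u_def by auto
      have vv: "v = x @\<^sub>v u" unfolding x_def u_def using vec_first_last_append[OF v] by simp
      have "x = 0\<^sub>v n \<and> u = 0\<^sub>v m" using K x u eqv[OF x u] z unfolding Kc_def vv by blast
      then show "v = 0\<^sub>v (n + m)" using vv zero_append by metis
    qed
  qed
qed

lemma ros_surj:
  assumes K: "Kc lam" and b1: "b1 \<in> carrier_vec n" and b2: "b2 \<in> carrier_vec m"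
  shows "\<exists>x\<in>carrier_vec n. \<exists>y\<in>carrier_vec p.
    transpose_mat A *\<^sub>v x + transpose_mat C *\<^sub>v y = lam \<cdot>\<^sub>v x + b1 \<and>
    transpose_mat B *\<^sub>v x + transpose_mat D *\<^sub>v y = b2"
proof -
  note R = ros_carrier[of lam]
  have Kr: "v = 0\<^sub>v (n + m)" if "v \<in> carrier_vec (n + m)" "rosenbrock A B C D lam *\<^sub>v v = 0\<^sub>v (n + p)" for v
    using ros_ker[of lam] K full_col_rank_iff[OF R] that by blast
  have bb: "b1 @\<^sub>v b2 \<in> carrier_vec (n + m)" using b1 b2 by auto
  obtain w where w: "w \<in> carrier_vec (n + p)" "transpose_mat (rosenbrock A B C D lam) *\<^sub>v w = b1 @\<^sub>v b2"
    using transpose_surj[OF R Kr bb] by blast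
  define x where "x = vec_first w n"
  define y where "y = vec_last w p"
  have x: "x \<in> carrier_vec n" and y: "y \<in> carrier_vec p" unfolding x_def y_def by auto
  have ww: "w = x @\<^sub>v y" unfolding x_def y_def using vec_first_last_append[OF w(1)] by simp
  have Al: "A - lam \<cdot>\<^sub>m 1\<^sub>m n \<in> carrier_mat n n" using A by auto
  have At: "transpose_mat A \<in> carrier_mat n n" using A by auto
  have tAl: "transpose_mat (A - lam \<cdot>\<^sub>m 1\<^sub>m n) = transpose_mat A - lam \<cdot>\<^sub>m 1\<^sub>m n"
    using A by (intro eq_matI) auto
  have RT: "transpose_mat (rosenbrock A B C D lam) =
      four_block_mat (transpose_mat A - lam \<cdot>\<^sub>m 1\<^sub>m n) (transpose_mat C) (transpose_mat B) (transpose_mat D)"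
    unfolding rosenbrock_def using A transpose_four_block_mat[OF Al B C D] tAl by simp
  have Atl: "transpose_mat A - lam \<cdot>\<^sub>m 1\<^sub>m n \<in> carrier_mat n n" using A by auto
  have "transpose_mat (rosenbrock A B C D lam) *\<^sub>v w =
      (transpose_mat A *\<^sub>v x - lam \<cdot>\<^sub>v x + transpose_mat C *\<^sub>v y) @\<^sub>v (transpose_mat B *\<^sub>v x + transpose_mat D *\<^sub>v y)"
  proof -
    have Ct: "transpose_mat C \<in> carrier_mat n p" and Bt: "transpose_mat B \<in> carrier_mat m n"
      and Dt: "transpose_mat D \<in> carrier_mat m p" using B C D by auto
    show ?thesis unfolding RT ww using four_block_mat_mult_vec[OF Atl Ct Bt Dt x y]
      smult_one_mult_vec[OF At x] by simp
  qed
  then have e: "transpose_mat A *\<^sub>v x - lam \<cdot>\<^sub>v x + transpose_mat C *\<^sub>v y = b1 \<and>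
      transpose_mat B *\<^sub>v x + transpose_mat D *\<^sub>v y = b2"
    using w(2) append_vec_eq[of "transpose_mat A *\<^sub>v x - lam \<cdot>\<^sub>v x + transpose_mat C *\<^sub>v y" n b1]
      At C x y b1 by auto
  have "transpose_mat A *\<^sub>v x + transpose_mat C *\<^sub>v y = lam \<cdot>\<^sub>v x + b1"
    using e vec_move1[of "transpose_mat A *\<^sub>v x" n "lam \<cdot>\<^sub>v x" "transpose_mat C *\<^sub>v y" b1] At C x y b1 by auto
  then show ?thesis using e x y by blast
qed

end

lemma vec_lin_a:
  fixes a b c :: "'a :: ab_group_add vec"
  assumes "a \<in> carrier_vec n" "b \<in> carrier_vec n" "c \<in> carrier_vec n" "b - a = c"
  shows "a + c = b"
proof (rule eq_vecI)
  fix i assume "i < dim_vec b"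
  then have i: "i < n" using assms by auto
  have "(b - a) $ i = c $ i" using assms(4) by simp
  then show "(a + c) $ i = b $ i" using assms(1-3) i by (simp add: algebra_simps)
qed (use assms in auto)

lemma lin3:
  fixes c r1 r2 l1 l2 :: "'a :: ab_group_add"
  assumes h1: "c + r1 = l1" and h2: "c + r2 = l2"
  shows "l2 + r1 = l1 + r2"
proof -
  have "l2 + r1 = c + r2 + r1" using h2 by simp
  also have "\<dots> = c + r1 + r2" by (simp add: algebra_simps)
  also have "\<dots> = l1 + r2" using h1 by simp
  finally show ?thesis .
qed

lemma smult_one_vec:
  fixes x :: "complex vec" assumes x: "x \<in> carrier_vec n"
  shows "(lam \<cdot>\<^sub>m 1\<^sub>m n) *\<^sub>v x = lam \<cdot>\<^sub>v x"
  using smult_one_mult_vec[OF zero_carrier_mat[of n n] x, of lam] x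
  by (intro eq_vecI) (auto simp: vec_eq_iff)

lemma eig_vec_lin:
  fixes A :: "complex mat"
  assumes A: "A \<in> carrier_mat n n" and x: "x \<in> carrier_vec n" and x0: "x0 \<in> carrier_vec n"
    and c: "c \<in> carrier_vec n"
    and e1: "A *\<^sub>v x + c = lam \<cdot>\<^sub>v x" and e2: "A *\<^sub>v x0 + c = lam \<cdot>\<^sub>v x0"
  shows "A *\<^sub>v (x - x0) = lam \<cdot>\<^sub>v (x - x0)"
proof -
  have "A *\<^sub>v (x - x0) = A *\<^sub>v x - A *\<^sub>v x0" using A x x0 by (rule mult_minus_distrib_mat_vec)
  also have "\<dots> = lam \<cdot>\<^sub>v (x - x0)"
  proof (rule eq_vecI)
    fix i assume "i < dim_vec (lam \<cdot>\<^sub>v (x - x0))"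
    then have i: "i < n" using x0 by auto
    have "(A *\<^sub>v x + c) $ i = (lam \<cdot>\<^sub>v x) $ i" "(A *\<^sub>v x0 + c) $ i = (lam \<cdot>\<^sub>v x0) $ i" using e1 e2 by auto
    then have "c $ i + (A *\<^sub>v x) $ i = lam * x $ i" "c $ i + (A *\<^sub>v x0) $ i = lam * x0 $ i"
      using A x x0 c i by (auto simp: algebra_simps simp del: index_mult_mat_vec)
    from lin3[OF this] show "(A *\<^sub>v x - A *\<^sub>v x0) $ i = (lam \<cdot>\<^sub>v (x - x0)) $ i"
      using A x x0 c i by (simp add: algebra_simps del: index_mult_mat_vec)
  qed (use A x0 in auto)
  finally show ?thesis .
qed

lemma eigspace_ev:
  fixes F :: "complex mat"
  assumes F: "F \<in> carrier_mat \<nu> \<nu>" and f: "f \<in> eigspace F lam"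
  shows "f \<in> carrier_vec \<nu> \<and> F *\<^sub>v f = lam \<cdot>\<^sub>v f"
proof -
  have fc: "f \<in> carrier_vec \<nu>" and z: "(lam \<cdot>\<^sub>m 1\<^sub>m \<nu> - F) *\<^sub>v f = 0\<^sub>v \<nu>"
    using f F unfolding eigspace_def by auto
  have "(lam \<cdot>\<^sub>m 1\<^sub>m \<nu> - F) *\<^sub>v f = (lam \<cdot>\<^sub>m 1\<^sub>m \<nu>) *\<^sub>v f - F *\<^sub>v f"
    using F fc by (intro minus_mult_distrib_mat_vec) auto
  also have "(lam \<cdot>\<^sub>m 1\<^sub>m \<nu>) *\<^sub>v f = lam \<cdot>\<^sub>v f" by (rule smult_one_vec[OF fc])
  finally have z2: "lam \<cdot>\<^sub>v f - F *\<^sub>v f = 0\<^sub>v \<nu>" using z by simp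
  have "F *\<^sub>v f = lam \<cdot>\<^sub>v f"
  proof (rule eq_vecI)
    fix i assume "i < dim_vec (lam \<cdot>\<^sub>v f)"
    then have i: "i < \<nu>" using fc by auto
    have "(lam \<cdot>\<^sub>v f - F *\<^sub>v f) $ i = 0" using z2 i by simp
    then show "(F *\<^sub>v f) $ i = (lam \<cdot>\<^sub>v f) $ i" using F fc i by (simp del: index_mult_mat_vec)
  qed (use F fc in auto)
  then show ?thesis using fc by simp
qed

context
  fixes A B C D F :: "complex mat" and n m p \<nu> :: nat
  assumes A: "A \<in> carrier_mat n n" and B: "B \<in> carrier_mat n m"
    and C: "C \<in> carrier_mat p n" and D: "D \<in> carrier_mat p m"
    and F: "F \<in> carrier_mat \<nu> \<nu>"
    and disj: "eig A \<inter> eig F = {}"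
begin

definition PiH :: "complex mat \<Rightarrow> complex mat" where
  "PiH H = (THE Pi. Pi \<in> carrier_mat n \<nu> \<and> Pi * F - A * Pi = B * H)"

lemma SSCp_eq: "SSC_p A B C D F H = C * PiH H + D * H"
  unfolding SSC_p_def PiH_def Let_def using A F by simp

lemma PiH:
  assumes H: "H \<in> carrier_mat m \<nu>"
  shows "PiH H \<in> carrier_mat n \<nu> \<and> PiH H * F - A * PiH H = B * H"
proof -
  have "B * H \<in> carrier_mat n \<nu>" using B H by auto
  from sylvester[OF A F disj this] show ?thesis unfolding PiH_def by (rule theI')
qed

lemma PiH_uniq:
  assumes H: "H \<in> carrier_mat m \<nu>" and P: "P \<in> carrier_mat n \<nu>" "P * F - A * P = B * H"
  shows "PiH H = P"
proof -
  have "B * H \<in> carrier_mat n \<nu>" using B H by auto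
  from sylvester[OF A F disj this] P show ?thesis unfolding PiH_def by (intro the1_equality) auto
qed

lemma SSCp_carrier: "H \<in> carrier_mat m \<nu> \<Longrightarrow> SSC_p A B C D F H \<in> carrier_mat p \<nu>"
  unfolding SSCp_eq using PiH[of H] C D by auto

definition MG :: "complex mat \<Rightarrow> complex mat" where
  "MG G = (THE M. M \<in> carrier_mat \<nu> n \<and> M * A - F * M = G * C)"

lemma SSCd_eq: "SSC_d A B C D F G = - (MG G * B) + G * D"
  unfolding SSC_d_def MG_def Let_def using A F by simp

lemma MG:
  assumes G: "G \<in> carrier_mat \<nu> p"
  shows "MG G \<in> carrier_mat \<nu> n \<and> MG G * A - F * MG G = G * C"
proof -
  have "G * C \<in> carrier_mat \<nu> n" using C G by auto
  from sylvester_left[OF A F disj this] show ?thesis unfolding MG_def by (rule theI')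
qed

lemma MG_uniq:
  assumes G: "G \<in> carrier_mat \<nu> p" and M: "M \<in> carrier_mat \<nu> n" "M * A - F * M = G * C"
  shows "MG G = M"
proof -
  have "G * C \<in> carrier_mat \<nu> n" using C G by auto
  from sylvester_left[OF A F disj this] M show ?thesis unfolding MG_def by (intro the1_equality) auto
qed

lemma SSCd_carrier: "G \<in> carrier_mat \<nu> p \<Longrightarrow> SSC_d A B C D F G \<in> carrier_mat \<nu> m"
  unfolding SSCd_eq using MG[of G] B D by auto

lemma left_ev:
  assumes lam: "lam \<in> eig F"
  shows "\<exists>w\<in>carrier_vec \<nu>. w \<noteq> 0\<^sub>v \<nu> \<and> transpose_mat F *\<^sub>v w = lam \<cdot>\<^sub>v w"
proof -
  have Ft: "transpose_mat F \<in> carrier_mat \<nu> \<nu>" using F by auto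
  have "lam \<in> eig (transpose_mat F)" using lam eig_transpose[OF F] by simp
  then show ?thesis using eig_iff[OF Ft] by auto
qed

lemma noev_A: "lam \<in> eig F \<Longrightarrow> x \<in> carrier_vec n \<Longrightarrow> A *\<^sub>v x = lam \<cdot>\<^sub>v x \<Longrightarrow> x = 0\<^sub>v n"
  using disj eig_iff[OF A, of lam] by blast

lemma core:
  assumes H: "H \<in> carrier_mat m \<nu>" and ev: "eigenvector F f lam"
  shows "lam \<in> eig F" "f \<in> carrier_vec \<nu>" "f \<noteq> 0\<^sub>v \<nu>"
    "PiH H *\<^sub>v f \<in> carrier_vec n" "H *\<^sub>v f \<in> carrier_vec m"
    "A *\<^sub>v (PiH H *\<^sub>v f) + B *\<^sub>v (H *\<^sub>v f) = lam \<cdot>\<^sub>v (PiH H *\<^sub>v f)"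
    "SSC_p A B C D F H *\<^sub>v f = C *\<^sub>v (PiH H *\<^sub>v f) + D *\<^sub>v (H *\<^sub>v f)"
proof -
  show "lam \<in> eig F" using ev unfolding eig_def eigenvalue_def by auto
  show f: "f \<in> carrier_vec \<nu>" "f \<noteq> 0\<^sub>v \<nu>" using ev F unfolding eigenvector_def by auto
  have Ff: "F *\<^sub>v f = lam \<cdot>\<^sub>v f" using ev unfolding eigenvector_def by auto
  note P = PiH[OF H]
  show x: "PiH H *\<^sub>v f \<in> carrier_vec n" using P f by auto
  show u: "H *\<^sub>v f \<in> carrier_vec m" using H f by auto
  have "(PiH H * F - A * PiH H) *\<^sub>v f = PiH H * F *\<^sub>v f - A * PiH H *\<^sub>v f"
    using P F A f by (intro minus_mult_distrib_mat_vec) auto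
  also have "PiH H * F *\<^sub>v f = lam \<cdot>\<^sub>v (PiH H *\<^sub>v f)"
    using assoc_mult_mat_vec[of "PiH H" n \<nu> F \<nu> f] P F f Ff mult_mat_vec[of "PiH H" n \<nu> f lam] by auto
  also have "A * PiH H *\<^sub>v f = A *\<^sub>v (PiH H *\<^sub>v f)" using A P f by (intro assoc_mult_mat_vec) auto
  finally have "lam \<cdot>\<^sub>v (PiH H *\<^sub>v f) - A *\<^sub>v (PiH H *\<^sub>v f) = B *\<^sub>v (H *\<^sub>v f)"
    using P assoc_mult_mat_vec[OF B H f(1)] by simp
  then show "A *\<^sub>v (PiH H *\<^sub>v f) + B *\<^sub>v (H *\<^sub>v f) = lam \<cdot>\<^sub>v (PiH H *\<^sub>v f)"
    using A B x u by (intro vec_lin_a) auto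
  have "SSC_p A B C D F H *\<^sub>v f = C * PiH H *\<^sub>v f + D * H *\<^sub>v f"
    unfolding SSCp_eq using C D P H f by (intro add_mult_distrib_mat_vec) auto
  also have "\<dots> = C *\<^sub>v (PiH H *\<^sub>v f) + D *\<^sub>v (H *\<^sub>v f)"
    using C D P H f by (simp add: assoc_mult_mat_vec[of _ p n _ \<nu>] assoc_mult_mat_vec[of _ p m _ \<nu>])
  finally show "SSC_p A B C D F H *\<^sub>v f = C *\<^sub>v (PiH H *\<^sub>v f) + D *\<^sub>v (H *\<^sub>v f)" .
qed

end

lemma mat_lin1:
  fixes a1 a2 b1 b2 X1 X2 P :: "'a :: ab_group_add mat"
  assumes c: "a1 \<in> carrier_mat r k" "a2 \<in> carrier_mat r k" "b1 \<in> carrier_mat r k" "b2 \<in> carrier_mat r k"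
     "X1 \<in> carrier_mat r k" "X2 \<in> carrier_mat r k" "P \<in> carrier_mat r k"
    and h1: "X1 = a1 + b1 + P" and h2: "X2 = a2 + b2 + P"
  shows "(a1 - a2) + (b1 - b2) = X1 - X2"
proof (rule eq_matI)
  fix i j assume "i < dim_row (X1 - X2)" "j < dim_col (X1 - X2)"
  then have ij: "i < r" "j < k" using c by auto
  have "X1 $$ (i,j) = (a1 + b1 + P) $$ (i,j)" "X2 $$ (i,j) = (a2 + b2 + P) $$ (i,j)" using h1 h2 by auto
  then show "(a1 - a2 + (b1 - b2)) $$ (i,j) = (X1 - X2) $$ (i,j)" using c ij by (simp add: algebra_simps)
qed (use c in auto)

lemma mat_lin2:
  fixes a1 a2 b1 b2 f1 f2 :: "'a :: ab_group_add mat"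
  assumes c: "a1 \<in> carrier_mat r k" "a2 \<in> carrier_mat r k" "b1 \<in> carrier_mat r k" "b2 \<in> carrier_mat r k"
     "f1 \<in> carrier_mat r k" "f2 \<in> carrier_mat r k"
    and h1: "f1 - a1 = b1" and h2: "f2 - a2 = b2"
  shows "(a1 - a2) + (b1 - b2) = f1 - f2"
proof (rule eq_matI)
  fix i j assume "i < dim_row (f1 - f2)" "j < dim_col (f1 - f2)"
  then have ij: "i < r" "j < k" using c by auto
  have "(f1 - a1) $$ (i,j) = b1 $$ (i,j)" "(f2 - a2) $$ (i,j) = b2 $$ (i,j)" using h1 h2 by auto
  then show "(a1 - a2 + (b1 - b2)) $$ (i,j) = (f1 - f2) $$ (i,j)" using c ij by (simp add: algebra_simps)
qed (use c in auto)

lemma mat_lin3: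
  fixes c1 c2 d1 d2 :: "'a :: ab_group_add mat"
  assumes c: "c1 \<in> carrier_mat r k" "c2 \<in> carrier_mat r k" "d1 \<in> carrier_mat r k" "d2 \<in> carrier_mat r k"
    and h: "c1 + d1 = c2 + d2"
  shows "(c1 - c2) + (d1 - d2) = 0\<^sub>m r k"
proof (rule eq_matI)
  fix i j assume "i < dim_row (0\<^sub>m r k :: 'a mat)" "j < dim_col (0\<^sub>m r k :: 'a mat)"
  then have ij: "i < r" "j < k" by auto
  have "(c1 + d1) $$ (i,j) = (c2 + d2) $$ (i,j)" using h by auto
  then show "(c1 - c2 + (d1 - d2)) $$ (i,j) = 0\<^sub>m r k $$ (i,j)" using c ij by (simp add: algebra_simps)
qed (use c in auto)

lemma mat_sub0:
  fixes X1 X2 :: "'a :: ab_group_add mat"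
  assumes c: "X1 \<in> carrier_mat r k" "X2 \<in> carrier_mat r k" and h: "X1 - X2 = 0\<^sub>m r k"
  shows "X1 = X2"
proof (rule eq_matI)
  fix i j assume "i < dim_row X2" "j < dim_col X2"
  then have ij: "i < r" "j < k" using c by auto
  have "(X1 - X2) $$ (i,j) = 0\<^sub>m r k $$ (i,j)" using h by auto
  then show "X1 $$ (i,j) = X2 $$ (i,j)" using c ij by simp
qed (use c in auto)

lemma mat_lin4:
  fixes X a b :: "'a :: ab_group_add mat"
  assumes c: "X \<in> carrier_mat r k" "a \<in> carrier_mat r k" "b \<in> carrier_mat r k" and h: "X = a + b"
  shows "X - a = b"
proof (rule eq_matI)
  fix i j assume "i < dim_row b" "j < dim_col b"
  then have ij: "i < r" "j < k" using c by auto
  have "X $$ (i,j) = (a + b) $$ (i,j)" using h by auto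
  then show "(X - a) $$ (i,j) = b $$ (i,j)" using c ij by simp
qed (use c in auto)

lemma zero_add_zero_mat: "0\<^sub>m r k + 0\<^sub>m r k = (0\<^sub>m r k :: 'a :: monoid_add mat)"
  by (intro eq_matI) auto

context
  fixes A B C D F :: "complex mat" and n m p \<nu> :: nat
  assumes A: "A \<in> carrier_mat n n" and B: "B \<in> carrier_mat n m"
    and C: "C \<in> carrier_mat p n" and D: "D \<in> carrier_mat p m"
    and F: "F \<in> carrier_mat \<nu> \<nu>"
    and disj: "eig A \<inter> eig F = {}"
begin

lemma kern_from:
  assumes Ki: "\<forall>lam\<in>eig F. Kc A B C D n m p lam"
  shows "\<And>lam x y. lam \<in> eig F \<Longrightarrow> x \<in> carrier_vec n \<Longrightarrow> y \<in> carrier_vec m \<Longrightarrow>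
      A *\<^sub>v x + B *\<^sub>v y = lam \<cdot>\<^sub>v x \<Longrightarrow> C *\<^sub>v x + D *\<^sub>v y = 0\<^sub>v p \<Longrightarrow> x = 0\<^sub>v n \<and> y = 0\<^sub>v m"
  using Ki unfolding Kc_def[OF A B C D] by blast

lemma not_Kc:
  assumes lam: "lam \<in> eig F" and nK: "\<not> Kc A B C D n m p lam"
  obtains x u w where "x \<in> carrier_vec n" "u \<in> carrier_vec m" "w \<in> carrier_vec \<nu>"
    "A *\<^sub>v x + B *\<^sub>v u = lam \<cdot>\<^sub>v x" "C *\<^sub>v x + D *\<^sub>v u = 0\<^sub>v p" "\<not> (x = 0\<^sub>v n \<and> u = 0\<^sub>v m)"
    "u \<noteq> 0\<^sub>v m" "w \<noteq> 0\<^sub>v \<nu>" "transpose_mat F *\<^sub>v w = lam \<cdot>\<^sub>v w"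
proof -
  from nK obtain x u where xu: "x \<in> carrier_vec n" "u \<in> carrier_vec m"
    "A *\<^sub>v x + B *\<^sub>v u = lam \<cdot>\<^sub>v x" "C *\<^sub>v x + D *\<^sub>v u = 0\<^sub>v p" "\<not> (x = 0\<^sub>v n \<and> u = 0\<^sub>v m)"
    unfolding Kc_def[OF A B C D] by blast
  have "u \<noteq> 0\<^sub>v m"
  proof
    assume u0: "u = 0\<^sub>v m"
    have B0: "B *\<^sub>v 0\<^sub>v m = 0\<^sub>v n" using B by (intro eq_vecI) (auto simp: scalar_prod_def)
    have "A *\<^sub>v x + B *\<^sub>v 0\<^sub>v m = lam \<cdot>\<^sub>v x" using xu(3) unfolding u0 .
    then have "A *\<^sub>v x + 0\<^sub>v n = lam \<cdot>\<^sub>v x" unfolding B0 .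
    then have "A *\<^sub>v x = lam \<cdot>\<^sub>v x" using A xu(1) by simp
    then have "x = 0\<^sub>v n" using noev_A[OF A B C D F disj lam xu(1)] by simp
    then show False using xu(5) u0 by simp
  qed
  moreover obtain w where "w \<in> carrier_vec \<nu>" "w \<noteq> 0\<^sub>v \<nu>" "transpose_mat F *\<^sub>v w = lam \<cdot>\<^sub>v w"
    using left_ev[OF A B C D F disj lam] by blast
  ultimately show ?thesis using xu that by blast
qed

lemma outer_sol:
  assumes x: "x \<in> carrier_vec n" and u: "u \<in> carrier_vec m" and w: "w \<in> carrier_vec \<nu>"
    and e1: "A *\<^sub>v x + B *\<^sub>v u = lam \<cdot>\<^sub>v x" and e2: "C *\<^sub>v x + D *\<^sub>v u = 0\<^sub>v p"
    and ew: "transpose_mat F *\<^sub>v w = lam \<cdot>\<^sub>v w"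
  shows "outer x w * F = A * outer x w + B * outer u w" "C * outer x w + D * outer u w = 0\<^sub>m p \<nu>"
proof -
  have "outer x w * F = outer x (lam \<cdot>\<^sub>v w)" using outer_mult[OF x w F] ew by simp
  also have "\<dots> = outer (lam \<cdot>\<^sub>v x) w" using outer_smult[OF x w] by simp
  also have "\<dots> = outer (A *\<^sub>v x + B *\<^sub>v u) w" using e1 by simp
  also have "\<dots> = outer (A *\<^sub>v x) w + outer (B *\<^sub>v u) w"
    using A B x u w by (intro outer_add[of _ n]) auto
  also have "\<dots> = A * outer x w + B * outer u w" using mult_outer[OF A x w] mult_outer[OF B u w] by simp
  finally show "outer x w * F = A * outer x w + B * outer u w" .
  have "C * outer x w + D * outer u w = outer (C *\<^sub>v x) w + outer (D *\<^sub>v u) w"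
    using mult_outer[OF C x w] mult_outer[OF D u w] by simp
  also have "\<dots> = outer (C *\<^sub>v x + D *\<^sub>v u) w" using C D x u w by (intro outer_add[of _ p, symmetric]) auto
  also have "\<dots> = 0\<^sub>m p \<nu>" using e2 outer_zero[OF w] by simp
  finally show "C * outer x w + D * outer u w = 0\<^sub>m p \<nu>" .
qed

lemma i_ii:
  assumes Ki: "\<forall>lam\<in>eig F. Kc A B C D n m p lam"
  and P: "P \<in> carrier_mat n \<nu>" and Q: "Q \<in> carrier_mat p \<nu>"
  and c: "Pi1 \<in> carrier_mat n \<nu>" "Psi1 \<in> carrier_mat m \<nu>" "Pi2 \<in> carrier_mat n \<nu>" "Psi2 \<in> carrier_mat m \<nu>"
  and h1: "Pi1 * F = A * Pi1 + B * Psi1 + P" and h2: "0\<^sub>m p \<nu> = C * Pi1 + D * Psi1 + Q"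
  and h3: "Pi2 * F = A * Pi2 + B * Psi2 + P" and h4: "0\<^sub>m p \<nu> = C * Pi2 + D * Psi2 + Q"
  shows "Pi1 = Pi2 \<and> Psi1 = Psi2"
proof -
  let ?X = "Pi1 - Pi2" and ?Y = "Psi1 - Psi2"
  have Xc: "?X \<in> carrier_mat n \<nu>" and Yc: "?Y \<in> carrier_mat m \<nu>" using c by auto
  have "A * ?X + B * ?Y = (A * Pi1 - A * Pi2) + (B * Psi1 - B * Psi2)"
    using A B c by (simp add: mult_minus_distrib_mat[of _ n n _ \<nu>] mult_minus_distrib_mat[of _ n m _ \<nu>])
  also have "\<dots> = Pi1 * F - Pi2 * F"
    by (rule mat_lin1[OF _ _ _ _ _ _ P h1 h3]) (use A B F c in auto)
  also have "\<dots> = ?X * F" using F c by (simp add: minus_mult_distrib_mat[of _ n \<nu>])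
  finally have e1: "A * ?X + B * ?Y = ?X * F" .
  have "C * ?X + D * ?Y = (C * Pi1 - C * Pi2) + (D * Psi1 - D * Psi2)"
    using C D c by (simp add: mult_minus_distrib_mat[of _ p n _ \<nu>] mult_minus_distrib_mat[of _ p m _ \<nu>])
  also have "\<dots> = 0\<^sub>m p \<nu> - 0\<^sub>m p \<nu>"
    by (rule mat_lin1[OF _ _ _ _ _ _ Q h2 h4]) (use C D c in auto)
  also have "\<dots> = 0\<^sub>m p \<nu>" by (intro eq_matI) auto
  finally have e2: "C * ?X + D * ?Y = 0\<^sub>m p \<nu>" .
  have "?X = 0\<^sub>m n \<nu> \<and> ?Y = 0\<^sub>m m \<nu>"
    by (rule gen_uniq[OF F A B C D kern_from[OF Ki] Xc Yc e1 e2])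
  then show ?thesis using c mat_sub0 by blast
qed

lemma ii_i:
  assumes ii: "\<forall>P \<in> carrier_mat n \<nu>. \<forall>Q \<in> carrier_mat p \<nu>.
            \<forall>Pi1 \<in> carrier_mat n \<nu>. \<forall>Psi1 \<in> carrier_mat m \<nu>.
            \<forall>Pi2 \<in> carrier_mat n \<nu>. \<forall>Psi2 \<in> carrier_mat m \<nu>.
              Pi1 * F = A * Pi1 + B * Psi1 + P \<and> 0\<^sub>m p \<nu> = C * Pi1 + D * Psi1 + Q \<and>
              Pi2 * F = A * Pi2 + B * Psi2 + P \<and> 0\<^sub>m p \<nu> = C * Pi2 + D * Psi2 + Q
              \<longrightarrow> Pi1 = Pi2 \<and> Psi1 = Psi2"
  shows "\<forall>lam\<in>eig F. Kc A B C D n m p lam"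
proof (rule ballI, rule ccontr)
  fix lam assume lam: "lam \<in> eig F" and nK: "\<not> Kc A B C D n m p lam"
  obtain x u w where xuw: "x \<in> carrier_vec n" "u \<in> carrier_vec m" "w \<in> carrier_vec \<nu>"
    "A *\<^sub>v x + B *\<^sub>v u = lam \<cdot>\<^sub>v x" "C *\<^sub>v x + D *\<^sub>v u = 0\<^sub>v p" "u \<noteq> 0\<^sub>v m" "w \<noteq> 0\<^sub>v \<nu>"
    "transpose_mat F *\<^sub>v w = lam \<cdot>\<^sub>v w" using not_Kc[OF lam nK] by metis
  note os = outer_sol[OF xuw(1-5,8)]
  have Pc: "outer x w \<in> carrier_mat n \<nu>" and Sc: "outer u w \<in> carrier_mat m \<nu>" using xuw by auto
  have s1: "outer x w * F = A * outer x w + B * outer u w + 0\<^sub>m n \<nu>" using os(1) A B Pc Sc by simp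
  have s2: "0\<^sub>m p \<nu> = C * outer x w + D * outer u w + 0\<^sub>m p \<nu>" using os(2) by (simp add: zero_add_zero_mat)
  have z1: "0\<^sub>m n \<nu> * F = A * 0\<^sub>m n \<nu> + B * 0\<^sub>m m \<nu> + 0\<^sub>m n \<nu>" using A B F by (simp add: zero_add_zero_mat)
  have z2: "0\<^sub>m p \<nu> = C * 0\<^sub>m n \<nu> + D * 0\<^sub>m m \<nu> + 0\<^sub>m p \<nu>" using C D by (simp add: zero_add_zero_mat)
  have "outer x w = 0\<^sub>m n \<nu> \<and> outer u w = 0\<^sub>m m \<nu>"
    using ii[rule_format, OF zero_carrier_mat zero_carrier_mat Pc Sc zero_carrier_mat zero_carrier_mat] s1 s2 z1 z2
    by blast
  then show False using outer_nonzero[OF xuw(2,3,6,7)] by simp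
qed

lemma i_iv:
  assumes Ki: "\<forall>lam\<in>eig F. Kc A B C D n m p lam"
  shows "inj_on (SSC_p A B C D F) (carrier_mat m \<nu>)"
proof (rule inj_onI)
  fix H1 H2 assume H1: "H1 \<in> carrier_mat m \<nu>" and H2: "H2 \<in> carrier_mat m \<nu>"
    and eq: "SSC_p A B C D F H1 = SSC_p A B C D F H2"
  note P1 = PiH[OF A B C D F disj H1] and P2 = PiH[OF A B C D F disj H2]
  let ?P1 = "PiH A B F n \<nu> H1" and ?P2 = "PiH A B F n \<nu> H2"
  let ?X = "?P1 - ?P2" and ?Y = "H1 - H2"
  have Xc: "?X \<in> carrier_mat n \<nu>" and Yc: "?Y \<in> carrier_mat m \<nu>" using P1 P2 H1 H2 by auto
  have "A * ?X + B * ?Y = (A * ?P1 - A * ?P2) + (B * H1 - B * H2)"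
    using A B P1 P2 H1 H2 by (simp add: mult_minus_distrib_mat[of _ n n _ \<nu>] mult_minus_distrib_mat[of _ n m _ \<nu>])
  also have "\<dots> = ?P1 * F - ?P2 * F"
    by (rule mat_lin2) (use A B F P1 P2 H1 H2 in auto)
  also have "\<dots> = ?X * F" using F P1 P2 by (simp add: minus_mult_distrib_mat[of _ n \<nu>])
  finally have e1: "A * ?X + B * ?Y = ?X * F" .
  have "C * ?X + D * ?Y = (C * ?P1 - C * ?P2) + (D * H1 - D * H2)"
    using C D P1 P2 H1 H2 by (simp add: mult_minus_distrib_mat[of _ p n _ \<nu>] mult_minus_distrib_mat[of _ p m _ \<nu>])
  also have "\<dots> = 0\<^sub>m p \<nu>"
    by (rule mat_lin3) (use C D P1 P2 H1 H2 eq SSCp_eq[OF A B C D F disj] in auto)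
  finally have e2: "C * ?X + D * ?Y = 0\<^sub>m p \<nu>" .
  have "?X = 0\<^sub>m n \<nu> \<and> ?Y = 0\<^sub>m m \<nu>"
    by (rule gen_uniq[OF F A B C D kern_from[OF Ki] Xc Yc e1 e2])
  then show "H1 = H2" using H1 H2 mat_sub0 by blast
qed

lemma iv_i:
  assumes inj: "inj_on (SSC_p A B C D F) (carrier_mat m \<nu>)"
  shows "\<forall>lam\<in>eig F. Kc A B C D n m p lam"
proof (rule ballI, rule ccontr)
  fix lam assume lam: "lam \<in> eig F" and nK: "\<not> Kc A B C D n m p lam"
  obtain x u w where xuw: "x \<in> carrier_vec n" "u \<in> carrier_vec m" "w \<in> carrier_vec \<nu>"
    "A *\<^sub>v x + B *\<^sub>v u = lam \<cdot>\<^sub>v x" "C *\<^sub>v x + D *\<^sub>v u = 0\<^sub>v p" "u \<noteq> 0\<^sub>v m" "w \<noteq> 0\<^sub>v \<nu>"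
    "transpose_mat F *\<^sub>v w = lam \<cdot>\<^sub>v w" using not_Kc[OF lam nK] by metis
  note os = outer_sol[OF xuw(1-5,8)]
  have Pc: "outer x w \<in> carrier_mat n \<nu>" and Sc: "outer u w \<in> carrier_mat m \<nu>" using xuw by auto
  have "outer x w * F - A * outer x w = B * outer u w"
    by (rule mat_lin4[OF _ _ _ os(1), of n \<nu>]) (use A B F Pc Sc in auto)
  then have "PiH A B F n \<nu> (outer u w) = outer x w" using PiH_uniq[OF A B C D F disj Sc Pc] by simp
  then have s1: "SSC_p A B C D F (outer u w) = 0\<^sub>m p \<nu>"
    using SSCp_eq[OF A B C D F disj] os(2) by simp
  have z0: "0\<^sub>m n \<nu> * F - A * 0\<^sub>m n \<nu> = B * 0\<^sub>m m \<nu>" using A B F by (intro eq_matI) auto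
  have "PiH A B F n \<nu> (0\<^sub>m m \<nu>) = 0\<^sub>m n \<nu>"
    using PiH_uniq[OF A B C D F disj zero_carrier_mat zero_carrier_mat z0] .
  then have s0: "SSC_p A B C D F (0\<^sub>m m \<nu>) = 0\<^sub>m p \<nu>"
    using SSCp_eq[OF A B C D F disj] C D by (simp add: zero_add_zero_mat)
  have "SSC_p A B C D F (outer u w) = SSC_p A B C D F (0\<^sub>m m \<nu>)" using s1 s0 by simp
  from inj_onD[OF inj this Sc zero_carrier_mat] have "outer u w = 0\<^sub>m m \<nu>" .
  then show False using outer_nonzero[OF xuw(2,3,6,7)] by simp
qed

end

lemma mat_lin5:
  fixes a b f P :: "'a :: ab_group_add mat"
  assumes c: "a \<in> carrier_mat r k" "b \<in> carrier_mat r k" "f \<in> carrier_mat r k" "P \<in> carrier_mat r k"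
    and h: "a + b = f + P"
  shows "a = f + (- b) + P"
proof (rule eq_matI)
  fix i j assume "i < dim_row (f + - b + P)" "j < dim_col (f + - b + P)"
  then have ij: "i < r" "j < k" using c by auto
  have "(a + b) $$ (i,j) = (f + P) $$ (i,j)" using h by auto
  then show "a $$ (i,j) = (f + - b + P) $$ (i,j)" using c ij by (simp add: algebra_simps)
qed (use c in auto)

lemma mat_lin6:
  fixes a b Q :: "'a :: ab_group_add mat"
  assumes c: "a \<in> carrier_mat r k" "b \<in> carrier_mat r k" "Q \<in> carrier_mat r k"
    and h: "a + b = Q"
  shows "0\<^sub>m r k = - a + (- b) + Q"
proof (rule eq_matI)
  fix i j assume "i < dim_row (- a + - b + Q)" "j < dim_col (- a + - b + Q)"
  then have ij: "i < r" "j < k" using c by auto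
  have "(a + b) $$ (i,j) = Q $$ (i,j)" using h by auto
  then show "0\<^sub>m r k $$ (i,j) = (- a + - b + Q) $$ (i,j)" using c ij by (simp add: algebra_simps)
qed (use c in auto)

lemma mat_lin7:
  fixes a f g :: "'a :: ab_group_add mat"
  assumes c: "a \<in> carrier_mat r k" "f \<in> carrier_mat r k" "g \<in> carrier_mat r k"
    and h: "a = f + g + 0\<^sub>m r k"
  shows "a - f = g"
proof (rule eq_matI)
  fix i j assume "i < dim_row g" "j < dim_col g"
  then have ij: "i < r" "j < k" using c by auto
  have "a $$ (i,j) = (f + g + 0\<^sub>m r k) $$ (i,j)" using h by auto
  then show "(a - f) $$ (i,j) = g $$ (i,j)" using c ij by (simp add: algebra_simps)
qed (use c in auto)

lemma mat_lin8:
  fixes a g Z :: "'a :: ab_group_add mat"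
  assumes c: "a \<in> carrier_mat r k" "g \<in> carrier_mat r k" "Z \<in> carrier_mat r k"
    and h: "0\<^sub>m r k = - a + g + (- Z)"
  shows "- a + g = Z"
proof (rule eq_matI)
  fix i j assume "i < dim_row Z" "j < dim_col Z"
  then have ij: "i < r" "j < k" using c by auto
  have "0\<^sub>m r k $$ (i,j) = (- a + g + (- Z)) $$ (i,j)" using h by auto
  then show "(- a + g) $$ (i,j) = Z $$ (i,j)" using c ij by (simp add: algebra_simps)
qed (use c in auto)

lemma mat_lin9:
  fixes a f g :: "'a :: ab_group_add mat"
  assumes c: "a \<in> carrier_mat r k" "f \<in> carrier_mat r k" "g \<in> carrier_mat r k"
    and h: "a - f = g"
  shows "a - g = f"
proof (rule eq_matI)
  fix i j assume "i < dim_row f" "j < dim_col f"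
  then have ij: "i < r" "j < k" using c by auto
  have "(a - f) $$ (i,j) = g $$ (i,j)" using h by auto
  then show "(a - g) $$ (i,j) = f $$ (i,j)" using c ij by (simp add: algebra_simps)
qed (use c in auto)

lemma vec_lin_b:
  fixes a b c :: "'a :: ab_group_add vec"
  assumes "a \<in> carrier_vec n" "b \<in> carrier_vec n" "c \<in> carrier_vec n" "a + b = c"
  shows "b = c - a"
proof (rule eq_vecI)
  fix i assume "i < dim_vec (c - a)"
  then have i: "i < n" using assms by auto
  have "(a + b) $ i = c $ i" using assms(4) by simp
  then show "b $ i = (c - a) $ i" using assms(1-3) i by (simp add: algebra_simps)
qed (use assms in auto)

lemma vec_lin_c:
  fixes a b :: "'a :: ab_group_add vec"
  assumes "a \<in> carrier_vec n" "b \<in> carrier_vec n" "a + b = 0\<^sub>v n"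
  shows "b = - a"
proof (rule eq_vecI)
  fix i assume "i < dim_vec (- a)"
  then have i: "i < n" using assms by auto
  have "(a + b) $ i = 0\<^sub>v n $ i" using assms(3) by simp
  then show "b $ i = (- a) $ i" using assms(1-2) i by (simp add: algebra_simps eq_neg_iff_add_eq_0)
qed (use assms in auto)

lemma mult_uminus_vec:
  fixes G :: "'a :: comm_ring_1 mat"
  assumes G: "G \<in> carrier_mat r k" and v: "v \<in> carrier_vec k"
  shows "G *\<^sub>v (- v) = - (G *\<^sub>v v)"
  using G v by (intro eq_vecI) (auto simp: scalar_prod_uminus_right)

context
  fixes A B C D F :: "complex mat" and n m p \<nu> :: nat
  assumes A: "A \<in> carrier_mat n n" and B: "B \<in> carrier_mat n m"
    and C: "C \<in> carrier_mat p n" and D: "D \<in> carrier_mat p m"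
    and F: "F \<in> carrier_mat \<nu> \<nu>"
    and disj: "eig A \<inter> eig F = {}"
begin

lemma i_iii:
  assumes Ki: "\<forall>lam\<in>eig F. Kc A B C D n m p lam"
  shows "\<forall>Pb \<in> carrier_mat \<nu> n. \<forall>Qb \<in> carrier_mat \<nu> m.
            \<exists>M \<in> carrier_mat \<nu> n. \<exists>G \<in> carrier_mat \<nu> p.
              M * A = F * M + G * C + Pb \<and> 0\<^sub>m \<nu> m = - (M * B) + G * D + Qb"
proof (intro ballI)
  fix Pb Qb :: "complex mat" assume Pb: "Pb \<in> carrier_mat \<nu> n" and Qb: "Qb \<in> carrier_mat \<nu> m"
  have Ft: "transpose_mat F \<in> carrier_mat \<nu> \<nu>" and At: "transpose_mat A \<in> carrier_mat n n"
    and Ct: "transpose_mat C \<in> carrier_mat n p" and Bt: "transpose_mat B \<in> carrier_mat m n"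
    and Dt: "transpose_mat D \<in> carrier_mat m p" and Pbt: "transpose_mat Pb \<in> carrier_mat n \<nu>"
    and Qbt: "transpose_mat Qb \<in> carrier_mat m \<nu>" using A B C D F Pb Qb by auto
  have surj: "\<exists>x\<in>carrier_vec n. \<exists>y\<in>carrier_vec p.
      transpose_mat A *\<^sub>v x + transpose_mat C *\<^sub>v y = lam \<cdot>\<^sub>v x + b1 \<and>
      transpose_mat B *\<^sub>v x + transpose_mat D *\<^sub>v y = b2"
    if "lam \<in> eig (transpose_mat F)" "b1 \<in> carrier_vec n" "b2 \<in> carrier_vec m" for lam b1 b2
  proof -
    have "lam \<in> eig F" using that(1) eig_transpose[OF F] by simp
    then show ?thesis using ros_surj[OF A B C D _ that(2,3)] Ki by blast
  qed
  obtain X Y where XY: "X \<in> carrier_mat n \<nu>" "Y \<in> carrier_mat p \<nu>"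
    "transpose_mat A * X + transpose_mat C * Y = X * transpose_mat F + transpose_mat Pb"
    "transpose_mat B * X + transpose_mat D * Y = transpose_mat Qb"
    using gen_exist[OF Ft At Ct Bt Dt surj Pbt Qbt] by blast
  have Xt: "transpose_mat X \<in> carrier_mat \<nu> n" and Yt: "transpose_mat Y \<in> carrier_mat \<nu> p" using XY by auto
  have "transpose_mat (transpose_mat A * X + transpose_mat C * Y) = transpose_mat X * A + transpose_mat Y * C"
    using At Ct XY(1,2) by (simp add: transpose_add[of _ n \<nu>] transpose_mult[of _ n n] transpose_mult[of _ n p])
  moreover have "transpose_mat (X * transpose_mat F + transpose_mat Pb) = F * transpose_mat X + Pb"
    using Ft XY(1,2) Pbt by (simp add: transpose_add[of _ n \<nu>] transpose_mult[of _ n \<nu>])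
  ultimately have E1: "transpose_mat X * A + transpose_mat Y * C = F * transpose_mat X + Pb"
    using XY(3) by simp
  have "transpose_mat (transpose_mat B * X + transpose_mat D * Y) = transpose_mat X * B + transpose_mat Y * D"
    using Bt Dt XY(1,2) by (simp add: transpose_add[of _ m \<nu>] transpose_mult[of _ m n] transpose_mult[of _ m p])
  then have E2: "transpose_mat X * B + transpose_mat Y * D = Qb" using XY(4) by simp
  show "\<exists>M \<in> carrier_mat \<nu> n. \<exists>G \<in> carrier_mat \<nu> p.
              M * A = F * M + G * C + Pb \<and> 0\<^sub>m \<nu> m = - (M * B) + G * D + Qb"
  proof (intro bexI conjI)
    have GC: "(- transpose_mat Y) * C = - (transpose_mat Y * C)" using Yt C by (intro uminus_mult_left_mat) auto
    show "transpose_mat X * A = F * transpose_mat X + (- transpose_mat Y) * C + Pb"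
      unfolding GC by (rule mat_lin5[OF _ _ _ _ E1, of \<nu> n]) (use Xt Yt A C F Pb in auto)
    have GD: "(- transpose_mat Y) * D = - (transpose_mat Y * D)" using Yt D by (intro uminus_mult_left_mat) auto
    show "0\<^sub>m \<nu> m = - (transpose_mat X * B) + (- transpose_mat Y) * D + Qb"
      unfolding GD by (rule mat_lin6[OF _ _ _ E2]) (use Xt Yt B D Qb in auto)
  qed (use Xt Yt in auto)
qed

lemma iii_v:
  assumes iii: "\<forall>Pb \<in> carrier_mat \<nu> n. \<forall>Qb \<in> carrier_mat \<nu> m.
            \<exists>M \<in> carrier_mat \<nu> n. \<exists>G \<in> carrier_mat \<nu> p.
              M * A = F * M + G * C + Pb \<and> 0\<^sub>m \<nu> m = - (M * B) + G * D + Qb"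
  shows "SSC_d A B C D F ` carrier_mat \<nu> p = carrier_mat \<nu> m"
proof
  show "SSC_d A B C D F ` carrier_mat \<nu> p \<subseteq> carrier_mat \<nu> m"
    using SSCd_carrier[OF A B C D F disj] by auto
  show "carrier_mat \<nu> m \<subseteq> SSC_d A B C D F ` carrier_mat \<nu> p"
  proof
    fix Z :: "complex mat" assume Z: "Z \<in> carrier_mat \<nu> m"
    then have mZ: "- Z \<in> carrier_mat \<nu> m" by auto
    obtain M G where MG: "M \<in> carrier_mat \<nu> n" "G \<in> carrier_mat \<nu> p"
      "M * A = F * M + G * C + 0\<^sub>m \<nu> n" "0\<^sub>m \<nu> m = - (M * B) + G * D + (- Z)"
      using iii[rule_format, OF zero_carrier_mat mZ] by blast
    have "M * A - F * M = G * C" by (rule mat_lin7[OF _ _ _ MG(3)]) (use MG A C F in auto)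
    then have "MG A C F n \<nu> G = M" using MG_uniq[OF A B C D F disj MG(2,1)] by simp
    then have "SSC_d A B C D F G = - (M * B) + G * D" using SSCd_eq[OF A B C D F disj] by simp
    also have "\<dots> = Z" by (rule mat_lin8[OF _ _ _ MG(4)]) (use MG B D Z in auto)
    finally show "Z \<in> SSC_d A B C D F ` carrier_mat \<nu> p" using MG(2) by force
  qed
qed

lemma v_i:
  assumes v: "SSC_d A B C D F ` carrier_mat \<nu> p = carrier_mat \<nu> m"
  shows "\<forall>lam\<in>eig F. Kc A B C D n m p lam"
proof (rule ballI, rule ccontr)
  fix lam assume lam: "lam \<in> eig F" and nK: "\<not> Kc A B C D n m p lam"
  obtain x u w where xuw: "x \<in> carrier_vec n" "u \<in> carrier_vec m" "w \<in> carrier_vec \<nu>"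
    "A *\<^sub>v x + B *\<^sub>v u = lam \<cdot>\<^sub>v x" "C *\<^sub>v x + D *\<^sub>v u = 0\<^sub>v p" "u \<noteq> 0\<^sub>v m" "w \<noteq> 0\<^sub>v \<nu>"
    "transpose_mat F *\<^sub>v w = lam \<cdot>\<^sub>v w" using not_Kc[OF A B C D F disj lam nK] by metis
  note x = xuw(1) and u = xuw(2) and w = xuw(3)
  define Z where "Z = outer (conjugate w) (conjugate u)"
  have Zc: "Z \<in> carrier_mat \<nu> m" unfolding Z_def using u w by auto
  then obtain G where G: "G \<in> carrier_mat \<nu> p" "SSC_d A B C D F G = Z" using v by (metis imageE)
  define M where "M = MG A C F n \<nu> G"
  have M: "M \<in> carrier_mat \<nu> n" "M * A - F * M = G * C" using MG[OF A B C D F disj G(1)] unfolding M_def by auto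
  have Zeq: "Z = - (M * B) + G * D" using G(2) SSCd_eq[OF A B C D F disj] unfolding M_def by simp
  define y where "y = M *\<^sub>v x"
  have y: "y \<in> carrier_vec \<nu>" unfolding y_def using M x by auto
  have cu: "conjugate u \<in> carrier_vec m" and cw: "conjugate w \<in> carrier_vec \<nu>" using u w by auto
  have "Z *\<^sub>v u = (conjugate u \<bullet> u) \<cdot>\<^sub>v conjugate w" unfolding Z_def by (rule outer_mult_vec[OF cw cu u])
  also have "conjugate u \<bullet> u = u \<bullet>c u" using comm_scalar_prod[OF cu u] by simp
  finally have "w \<bullet> (Z *\<^sub>v u) = (u \<bullet>c u) * (w \<bullet>c w)" using w cw by (simp add: scalar_prod_smult_right)
  moreover have "u \<bullet>c u \<noteq> 0" "w \<bullet>c w \<noteq> 0" using xuw(6,7) u w by auto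
  ultimately have ne: "w \<bullet> (Z *\<^sub>v u) \<noteq> 0" by simp
  have Bu: "B *\<^sub>v u = lam \<cdot>\<^sub>v x - A *\<^sub>v x" by (rule vec_lin_b[OF _ _ _ xuw(4)]) (use A B x u in auto)
  have Du: "D *\<^sub>v u = - (C *\<^sub>v x)" by (rule vec_lin_c[OF _ _ xuw(5)]) (use C D x u in auto)
  have MBc: "M * B \<in> carrier_mat \<nu> m" and GDc: "G * D \<in> carrier_mat \<nu> m" using M B G D by auto
  have "Z *\<^sub>v u = (- (M * B)) *\<^sub>v u + (G * D) *\<^sub>v u" unfolding Zeq
    by (rule add_mult_distrib_mat_vec) (use MBc GDc u in auto)
  also have "(- (M * B)) *\<^sub>v u = - (M *\<^sub>v (B *\<^sub>v u))"
    using uminus_mult_mat_vec[of u "M * B"] MBc u assoc_mult_mat_vec[OF M(1) B u] by auto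
  also have "(G * D) *\<^sub>v u = G *\<^sub>v (D *\<^sub>v u)" using assoc_mult_mat_vec[OF G(1) D u] .
  finally have Zu: "Z *\<^sub>v u = - (M *\<^sub>v (B *\<^sub>v u)) + G *\<^sub>v (D *\<^sub>v u)" .
  have Ax: "A *\<^sub>v x \<in> carrier_vec n" and Cx: "C *\<^sub>v x \<in> carrier_vec p" using A C x by auto
  have MAx: "M *\<^sub>v (A *\<^sub>v x) \<in> carrier_vec \<nu>" and GCx: "G *\<^sub>v (C *\<^sub>v x) \<in> carrier_vec \<nu>" using M G Ax Cx by auto
  have s1: "w \<bullet> (M *\<^sub>v (B *\<^sub>v u)) = lam * (w \<bullet> y) - w \<bullet> (M *\<^sub>v (A *\<^sub>v x))"
  proof -
    have "M *\<^sub>v (B *\<^sub>v u) = M *\<^sub>v (lam \<cdot>\<^sub>v x) - M *\<^sub>v (A *\<^sub>v x)" unfolding Bu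
      by (rule mult_minus_distrib_mat_vec[OF M(1)]) (use x Ax in auto)
    also have "M *\<^sub>v (lam \<cdot>\<^sub>v x) = lam \<cdot>\<^sub>v y" unfolding y_def using M x by (simp add: mult_mat_vec)
    finally show ?thesis using w y MAx by (simp add: scalar_prod_minus_distrib[of _ \<nu>] scalar_prod_smult_right)
  qed
  have s2: "w \<bullet> (G *\<^sub>v (D *\<^sub>v u)) = - (w \<bullet> (G *\<^sub>v (C *\<^sub>v x)))"
  proof -
    have dv: "dim_vec w = dim_vec (G *\<^sub>v (C *\<^sub>v x))" using w G(1) by simp
    show ?thesis unfolding Du mult_uminus_vec[OF G(1) Cx] scalar_prod_uminus_right[OF dv] ..
  qed
  have s3: "M *\<^sub>v (A *\<^sub>v x) - G *\<^sub>v (C *\<^sub>v x) = F *\<^sub>v y"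
  proof -
    have MAc: "M * A \<in> carrier_mat \<nu> n" and GCc: "G * C \<in> carrier_mat \<nu> n" using M A G C by auto
    have e: "M * A - G * C = F * M" by (rule mat_lin9[OF _ _ _ M(2)]) (use MAc GCc M F in auto)
    have "M *\<^sub>v (A *\<^sub>v x) - G *\<^sub>v (C *\<^sub>v x) = (M * A) *\<^sub>v x - (G * C) *\<^sub>v x"
      using assoc_mult_mat_vec[OF M(1) A x] assoc_mult_mat_vec[OF G(1) C x] by simp
    also have "\<dots> = (M * A - G * C) *\<^sub>v x" using MAc GCc x by (simp add: minus_mult_distrib_mat_vec)
    also have "\<dots> = F *\<^sub>v y" unfolding e y_def using assoc_mult_mat_vec[OF F M(1) x] .
    finally show ?thesis .
  qed
  have s4: "w \<bullet> (F *\<^sub>v y) = lam * (w \<bullet> y)"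
  proof -
    have "w \<bullet> (F *\<^sub>v y) = (transpose_mat F *\<^sub>v w) \<bullet> y" using transpose_vec_mult_scalar[OF F y w] by simp
    also have "\<dots> = lam * (w \<bullet> y)" using xuw(8) w y by simp
    finally show ?thesis .
  qed
  have "w \<bullet> (Z *\<^sub>v u) = - (w \<bullet> (M *\<^sub>v (B *\<^sub>v u))) + w \<bullet> (G *\<^sub>v (D *\<^sub>v u))"
  proof -
    have c1: "M *\<^sub>v (B *\<^sub>v u) \<in> carrier_vec \<nu>" and c2: "G *\<^sub>v (D *\<^sub>v u) \<in> carrier_vec \<nu>" using M B G D u by auto
    have dv: "dim_vec w = dim_vec (M *\<^sub>v (B *\<^sub>v u))" using w M(1) by simp
    show ?thesis unfolding Zu using scalar_prod_add_distrib[of w \<nu> "- (M *\<^sub>v (B *\<^sub>v u))" "G *\<^sub>v (D *\<^sub>v u)"] c1 c2 w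
      scalar_prod_uminus_right[OF dv] by simp
  qed
  also have "\<dots> = - lam * (w \<bullet> y) + (w \<bullet> (M *\<^sub>v (A *\<^sub>v x)) - w \<bullet> (G *\<^sub>v (C *\<^sub>v x)))"
    unfolding s1 s2 by (simp add: algebra_simps)
  also have "w \<bullet> (M *\<^sub>v (A *\<^sub>v x)) - w \<bullet> (G *\<^sub>v (C *\<^sub>v x)) = w \<bullet> (F *\<^sub>v y)"
    unfolding s3[symmetric] using w MAx GCx by (simp add: scalar_prod_minus_distrib[of _ \<nu>])
  also have "- lam * (w \<bullet> y) + w \<bullet> (F *\<^sub>v y) = 0" unfolding s4 by simp
  finally show False using ne by simp
qed

end

lemma vec_sub0:
  fixes x y :: "'a :: ab_group_add vec"
  assumes "x \<in> carrier_vec n" "y \<in> carrier_vec n" "x - y = 0\<^sub>v n"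
  shows "x = y"
proof (rule eq_vecI)
  fix i assume "i < dim_vec y"
  then have i: "i < n" using assms by auto
  have "(x - y) $ i = 0\<^sub>v n $ i" using assms(3) by simp
  then show "x $ i = y $ i" using assms(1,2) i by simp
qed (use assms in auto)

context
  fixes A B C D F :: "complex mat" and n m p \<nu> :: nat
  assumes A: "A \<in> carrier_mat n n" and B: "B \<in> carrier_mat n m"
    and C: "C \<in> carrier_mat p n" and D: "D \<in> carrier_mat p m"
    and F: "F \<in> carrier_mat \<nu> \<nu>"
    and disj: "eig A \<inter> eig F = {}"
begin

lemma Bzero: "B *\<^sub>v 0\<^sub>v m = 0\<^sub>v n" using B by (intro eq_vecI) (auto simp: scalar_prod_def)

lemma obs_fwd:
  assumes H: "H \<in> carrier_mat m \<nu>" and ev: "eigenvector F f lam" and K: "Kc A B C D n m p lam"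
    and Hf: "H *\<^sub>v f \<noteq> 0\<^sub>v m"
  shows "SSC_p A B C D F H *\<^sub>v f \<noteq> 0\<^sub>v p"
proof
  note cr = core[OF A B C D F disj H ev]
  assume "SSC_p A B C D F H *\<^sub>v f = 0\<^sub>v p"
  then have "C *\<^sub>v (PiH A B F n \<nu> H *\<^sub>v f) + D *\<^sub>v (H *\<^sub>v f) = 0\<^sub>v p" using cr(7) by simp
  then have "H *\<^sub>v f = 0\<^sub>v m" using K cr(4,5,6) unfolding Kc_def[OF A B C D] by blast
  then show False using Hf by simp
qed

lemma obs_back:
  assumes H: "H \<in> carrier_mat m \<nu>" and ev: "eigenvector F f lam"
    and S: "SSC_p A B C D F H *\<^sub>v f \<noteq> 0\<^sub>v p"
  shows "H *\<^sub>v f \<noteq> 0\<^sub>v m"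
proof
  note cr = core[OF A B C D F disj H ev]
  let ?x = "PiH A B F n \<nu> H *\<^sub>v f"
  assume u0: "H *\<^sub>v f = 0\<^sub>v m"
  have "A *\<^sub>v ?x + B *\<^sub>v 0\<^sub>v m = lam \<cdot>\<^sub>v ?x" using cr(6) unfolding u0 .
  then have "A *\<^sub>v ?x + 0\<^sub>v n = lam \<cdot>\<^sub>v ?x" unfolding Bzero .
  then have "A *\<^sub>v ?x = lam \<cdot>\<^sub>v ?x" using A cr(4) by simp
  then have x0: "?x = 0\<^sub>v n" using noev_A[OF A B C D F disj cr(1) cr(4)] by simp
  have "C *\<^sub>v 0\<^sub>v n = 0\<^sub>v p" "D *\<^sub>v 0\<^sub>v m = 0\<^sub>v p" using C D by (auto intro!: eq_vecI simp: scalar_prod_def)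
  then have "SSC_p A B C D F H *\<^sub>v f = 0\<^sub>v p" using cr(7) unfolding x0 u0 by simp
  then show False using S by simp
qed

lemma conv_K:
  assumes H: "H \<in> carrier_mat m \<nu>" and lam: "lam \<in> eig F"
    and sH: "(\<lambda>f. H *\<^sub>v f) ` eigspace F lam = carrier_vec m"
    and nv: "\<And>f. eigenvector F f lam \<Longrightarrow> SSC_p A B C D F H *\<^sub>v f \<noteq> 0\<^sub>v p"
  shows "Kc A B C D n m p lam"
  unfolding Kc_def[OF A B C D]
proof (intro ballI impI)
  fix x0 u0 :: "complex vec" assume x0: "x0 \<in> carrier_vec n" and u0: "u0 \<in> carrier_vec m"
    and e: "A *\<^sub>v x0 + B *\<^sub>v u0 = lam \<cdot>\<^sub>v x0 \<and> C *\<^sub>v x0 + D *\<^sub>v u0 = 0\<^sub>v p"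
  obtain f where f: "f \<in> eigspace F lam" "H *\<^sub>v f = u0" using sH u0 by (metis imageE)
  have fF: "f \<in> carrier_vec \<nu>" "F *\<^sub>v f = lam \<cdot>\<^sub>v f" using eigspace_ev[OF F f(1)] by auto
  show "x0 = 0\<^sub>v n \<and> u0 = 0\<^sub>v m"
  proof (cases "f = 0\<^sub>v \<nu>")
    case True
    then have u00: "u0 = 0\<^sub>v m" using f(2) H by (auto intro!: eq_vecI simp: scalar_prod_def)
    have "A *\<^sub>v x0 + B *\<^sub>v 0\<^sub>v m = lam \<cdot>\<^sub>v x0" using e unfolding u00 by simp
    then have "A *\<^sub>v x0 + 0\<^sub>v n = lam \<cdot>\<^sub>v x0" unfolding Bzero .
    then have "A *\<^sub>v x0 = lam \<cdot>\<^sub>v x0" using A x0 by simp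
    then show ?thesis using noev_A[OF A B C D F disj lam x0] u00 by simp
  next
    case False
    have ev: "eigenvector F f lam" unfolding eigenvector_def using fF False F by auto
    note cr = core[OF A B C D F disj H ev]
    let ?x = "PiH A B F n \<nu> H *\<^sub>v f"
    have Bu: "B *\<^sub>v u0 \<in> carrier_vec n" using B u0 by auto
    have "A *\<^sub>v (?x - x0) = lam \<cdot>\<^sub>v (?x - x0)"
      by (rule eig_vec_lin[OF A cr(4) x0 Bu]) (use cr(6) f(2) e in auto)
    then have "?x - x0 = 0\<^sub>v n" using noev_A[OF A B C D F disj lam] cr(4) x0 by auto
    then have xx: "?x = x0" using vec_sub0[OF cr(4) x0] by simp
    have "SSC_p A B C D F H *\<^sub>v f = 0\<^sub>v p" using cr(7) e unfolding xx f(2) by simp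
    then show ?thesis using nv[OF ev] by simp
  qed
qed

end

theorem theorem2:
  fixes A B C D F :: "complex mat" and n m p \<nu> :: nat
  assumes A: "A \<in> carrier_mat n n" and B: "B \<in> carrier_mat n m"
    and C: "C \<in> carrier_mat p n" and D: "D \<in> carrier_mat p m"
    and F: "F \<in> carrier_mat \<nu> \<nu>"
    and disj: "eig A \<inter> eig F = {}"
  defines "cond_i \<equiv> (\<forall>lam\<in>eig F. full_col_rank (rosenbrock A B C D lam))"
    and "cond_ii \<equiv> (\<forall>P \<in> carrier_mat n \<nu>. \<forall>Q \<in> carrier_mat p \<nu>.
            \<forall>Pi1 \<in> carrier_mat n \<nu>. \<forall>Psi1 \<in> carrier_mat m \<nu>.
            \<forall>Pi2 \<in> carrier_mat n \<nu>. \<forall>Psi2 \<in> carrier_mat m \<nu>.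
              Pi1 * F = A * Pi1 + B * Psi1 + P \<and> 0\<^sub>m p \<nu> = C * Pi1 + D * Psi1 + Q \<and>
              Pi2 * F = A * Pi2 + B * Psi2 + P \<and> 0\<^sub>m p \<nu> = C * Pi2 + D * Psi2 + Q
              \<longrightarrow> Pi1 = Pi2 \<and> Psi1 = Psi2)"
    and "cond_iii \<equiv> (\<forall>Pb \<in> carrier_mat \<nu> n. \<forall>Qb \<in> carrier_mat \<nu> m.
            \<exists>M \<in> carrier_mat \<nu> n. \<exists>G \<in> carrier_mat \<nu> p.
              M * A = F * M + G * C + Pb \<and> 0\<^sub>m \<nu> m = - (M * B) + G * D + Qb)"
    and "cond_iv \<equiv> inj_on (SSC_p A B C D F) (carrier_mat m \<nu>)"
    and "cond_v \<equiv> (SSC_d A B C D F ` carrier_mat \<nu> p = carrier_mat \<nu> m)"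
  shows "(cond_i \<longleftrightarrow> cond_ii) \<and> (cond_i \<longleftrightarrow> cond_iii) \<and> (cond_i \<longleftrightarrow> cond_iv) \<and> (cond_i \<longleftrightarrow> cond_v) \<and>
    (\<forall>H \<in> carrier_mat m \<nu>.
      (observable_pair F H \<and> cond_i \<longrightarrow> observable_pair F (SSC_p A B C D F H)) \<and>
      (detectable_pair F H \<and> (\<forall>lam\<in>eig F. Re lam \<ge> 0 \<longrightarrow> full_col_rank (rosenbrock A B C D lam))
         \<longrightarrow> detectable_pair F (SSC_p A B C D F H)) \<and>
      ((\<forall>lam\<in>eig F. (\<lambda>f. H *\<^sub>v f) ` eigspace F lam = carrier_vec m) \<longrightarrow>
         observable_pair F (SSC_p A B C D F H) \<longrightarrow> observable_pair F H \<and> cond_i) \<and>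
      ((\<forall>lam\<in>eig F. Re lam \<ge> 0 \<longrightarrow> (\<lambda>f. H *\<^sub>v f) ` eigspace F lam = carrier_vec m) \<longrightarrow>
         detectable_pair F (SSC_p A B C D F H) \<longrightarrow>
         detectable_pair F H \<and> (\<forall>lam\<in>eig F. Re lam \<ge> 0 \<longrightarrow> full_col_rank (rosenbrock A B C D lam))))"
proof -
  have Ki: "cond_i \<longleftrightarrow> (\<forall>lam\<in>eig F. Kc A B C D n m p lam)"
    unfolding cond_i_def using ros_ker[OF A B C D] by simp
  have Kr: "full_col_rank (rosenbrock A B C D lam) \<longleftrightarrow> Kc A B C D n m p lam" for lam
    using ros_ker[OF A B C D] by simp
  have i_ii: "cond_i \<longrightarrow> cond_ii" unfolding cond_ii_def Ki
    using i_ii[OF A B C D F disj] by blast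
  have ii_i: "cond_ii \<longrightarrow> cond_i" unfolding cond_ii_def Ki
    using ii_i[OF A B C D F disj] by blast
  have i_iii: "cond_i \<longrightarrow> cond_iii" unfolding cond_iii_def Ki
    using i_iii[OF A B C D F disj] by blast
  have iii_v: "cond_iii \<longrightarrow> cond_v" unfolding cond_iii_def cond_v_def
    using iii_v[OF A B C D F disj] by blast
  have v_i: "cond_v \<longrightarrow> cond_i" unfolding cond_v_def Ki
    using v_i[OF A B C D F disj] by blast
  have i_iv: "cond_i \<longrightarrow> cond_iv" unfolding cond_iv_def Ki
    using i_iv[OF A B C D F disj] by blast
  have iv_i: "cond_iv \<longrightarrow> cond_i" unfolding cond_iv_def Ki
    using iv_i[OF A B C D F disj] by blast
  have dH: "dim_row H = m" if "H \<in> carrier_mat m \<nu>" for H using that by auto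
  have dS: "dim_row (SSC_p A B C D F H) = p" if "H \<in> carrier_mat m \<nu>" for H
    using SSCp_carrier[OF A B C D F disj that] by auto
  have evE: "lam \<in> eig F" if "eigenvector F f lam" for f lam
    using that unfolding eig_def eigenvalue_def by auto
  have part: "\<forall>H \<in> carrier_mat m \<nu>.
      (observable_pair F H \<and> cond_i \<longrightarrow> observable_pair F (SSC_p A B C D F H)) \<and>
      (detectable_pair F H \<and> (\<forall>lam\<in>eig F. Re lam \<ge> 0 \<longrightarrow> full_col_rank (rosenbrock A B C D lam))
         \<longrightarrow> detectable_pair F (SSC_p A B C D F H)) \<and>
      ((\<forall>lam\<in>eig F. (\<lambda>f. H *\<^sub>v f) ` eigspace F lam = carrier_vec m) \<longrightarrow>
         observable_pair F (SSC_p A B C D F H) \<longrightarrow> observable_pair F H \<and> cond_i) \<and>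
      ((\<forall>lam\<in>eig F. Re lam \<ge> 0 \<longrightarrow> (\<lambda>f. H *\<^sub>v f) ` eigspace F lam = carrier_vec m) \<longrightarrow>
         detectable_pair F (SSC_p A B C D F H) \<longrightarrow>
         detectable_pair F H \<and> (\<forall>lam\<in>eig F. Re lam \<ge> 0 \<longrightarrow> full_col_rank (rosenbrock A B C D lam)))"
  proof (rule ballI)
    fix H :: "complex mat" assume H: "H \<in> carrier_mat m \<nu>"
    note fwd = obs_fwd[OF A B C D F disj H]
    note bwd = obs_back[OF A B C D F disj H]
    note cK = conv_K[OF A B C D F disj H]
    have g1: "observable_pair F H \<and> cond_i \<longrightarrow> observable_pair F (SSC_p A B C D F H)"
    proof
      assume a: "observable_pair F H \<and> cond_i"
      show "observable_pair F (SSC_p A B C D F H)"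
        unfolding observable_pair_def dS[OF H]
      proof (intro allI impI)
        fix lam f assume ev: "eigenvector F f lam"
        have "H *\<^sub>v f \<noteq> 0\<^sub>v m" using a ev unfolding observable_pair_def dH[OF H] by blast
        moreover have "Kc A B C D n m p lam" using a Ki evE[OF ev] by blast
        ultimately show "SSC_p A B C D F H *\<^sub>v f \<noteq> 0\<^sub>v p" using fwd[OF ev] by blast
      qed
    qed
    have g2: "detectable_pair F H \<and> (\<forall>lam\<in>eig F. Re lam \<ge> 0 \<longrightarrow> full_col_rank (rosenbrock A B C D lam))
         \<longrightarrow> detectable_pair F (SSC_p A B C D F H)"
    proof
      assume a: "detectable_pair F H \<and> (\<forall>lam\<in>eig F. Re lam \<ge> 0 \<longrightarrow> full_col_rank (rosenbrock A B C D lam))"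
      show "detectable_pair F (SSC_p A B C D F H)"
        unfolding detectable_pair_def dS[OF H]
      proof (intro allI impI)
        fix lam f assume re: "Re lam \<ge> 0" and ev: "eigenvector F f lam"
        have "H *\<^sub>v f \<noteq> 0\<^sub>v m" using a re ev unfolding detectable_pair_def dH[OF H] by blast
        moreover have "Kc A B C D n m p lam" using a Kr re evE[OF ev] by blast
        ultimately show "SSC_p A B C D F H *\<^sub>v f \<noteq> 0\<^sub>v p" using fwd[OF ev] by blast
      qed
    qed
    have g3: "(\<forall>lam\<in>eig F. (\<lambda>f. H *\<^sub>v f) ` eigspace F lam = carrier_vec m) \<longrightarrow>
         observable_pair F (SSC_p A B C D F H) \<longrightarrow> observable_pair F H \<and> cond_i"
    proof (intro impI)
      assume sH: "\<forall>lam\<in>eig F. (\<lambda>f. H *\<^sub>v f) ` eigspace F lam = carrier_vec m"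
        and ob: "observable_pair F (SSC_p A B C D F H)"
      have nv: "SSC_p A B C D F H *\<^sub>v f \<noteq> 0\<^sub>v p" if "eigenvector F f lam" for f lam
        using ob that unfolding observable_pair_def dS[OF H] by blast
      have "observable_pair F H" unfolding observable_pair_def dH[OF H]
        using bwd nv by blast
      moreover have "cond_i" unfolding Ki using cK sH nv by blast
      ultimately show "observable_pair F H \<and> cond_i" by blast
    qed
    have g4: "(\<forall>lam\<in>eig F. Re lam \<ge> 0 \<longrightarrow> (\<lambda>f. H *\<^sub>v f) ` eigspace F lam = carrier_vec m) \<longrightarrow>
         detectable_pair F (SSC_p A B C D F H) \<longrightarrow>
         detectable_pair F H \<and> (\<forall>lam\<in>eig F. Re lam \<ge> 0 \<longrightarrow> full_col_rank (rosenbrock A B C D lam))"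
    proof (intro impI)
      assume sH: "\<forall>lam\<in>eig F. Re lam \<ge> 0 \<longrightarrow> (\<lambda>f. H *\<^sub>v f) ` eigspace F lam = carrier_vec m"
        and ob: "detectable_pair F (SSC_p A B C D F H)"
      have nv: "SSC_p A B C D F H *\<^sub>v f \<noteq> 0\<^sub>v p" if "Re lam \<ge> 0" "eigenvector F f lam" for f lam
        using ob that unfolding detectable_pair_def dS[OF H] by blast
      have "detectable_pair F H" unfolding detectable_pair_def dH[OF H]
        using bwd nv by blast
      moreover have "\<forall>lam\<in>eig F. Re lam \<ge> 0 \<longrightarrow> full_col_rank (rosenbrock A B C D lam)"
      proof (intro ballI impI)
        fix lam assume lam: "lam \<in> eig F" and re: "Re lam \<ge> 0"
        have "Kc A B C D n m p lam" using cK[OF lam] sH lam re nv by blast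
        then show "full_col_rank (rosenbrock A B C D lam)" using Kr by simp
      qed
      ultimately show "detectable_pair F H \<and> (\<forall>lam\<in>eig F. Re lam \<ge> 0 \<longrightarrow> full_col_rank (rosenbrock A B C D lam))"
        by blast
    qed
    show "(observable_pair F H \<and> cond_i \<longrightarrow> observable_pair F (SSC_p A B C D F H)) \<and>
      (detectable_pair F H \<and> (\<forall>lam\<in>eig F. Re lam \<ge> 0 \<longrightarrow> full_col_rank (rosenbrock A B C D lam))
         \<longrightarrow> detectable_pair F (SSC_p A B C D F H)) \<and>
      ((\<forall>lam\<in>eig F. (\<lambda>f. H *\<^sub>v f) ` eigspace F lam = carrier_vec m) \<longrightarrow>
         observable_pair F (SSC_p A B C D F H) \<longrightarrow> observable_pair F H \<and> cond_i) \<and>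
      ((\<forall>lam\<in>eig F. Re lam \<ge> 0 \<longrightarrow> (\<lambda>f. H *\<^sub>v f) ` eigspace F lam = carrier_vec m) \<longrightarrow>
         detectable_pair F (SSC_p A B C D F H) \<longrightarrow>
         detectable_pair F H \<and> (\<forall>lam\<in>eig F. Re lam \<ge> 0 \<longrightarrow> full_col_rank (rosenbrock A B C D lam)))"
      using g1 g2 g3 g4 by blast
  qed
  show ?thesis using i_ii ii_i i_iii iii_v v_i i_iv iv_i part by blast
qed

end
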